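(* For $0\le r\le n$ and $0\le s\le\min(r,n-r)$, $\mathrm{tr}(\Lambda_s^{r,r})=\binom{n}{r}$, and the orthogonal projection $P_s^r$ of $L^2(X)$ onto $L^2(X_r)_s$ is $$P_s^r=\frac{\binom{n}{s}-\binom{n}{s-1}}{\binom{n}{r}}\,\Lambda_s^{r,r}.$$
   Context: Let $\Omega$ be a finite set with $|\Omega|=n\ge1$, $G=S(\Omega)$, $X=\mathcal P(\Omega)$, $X_r=\{x\in X:|x|=r\}$, $G$ acting on $L^2(X)$ (complex functions on $X$ with standard inner product; $L^2(X_r)$ = functions supported on $X_r$) by $(\rho(g)\psi)(x)=\psi(g^{-1}x)$. For $0\le s\le\min(r,n-r)$, $L^2(X_r)_s$ is the unique irreducible $G$-subspace of $L^2(X_r)$ isomorphic to the irreducible representation associated with the partition $(n-s,s)$. For $0\le s\le\min(r_1,n-r_1,r_2,n-r_2)$, $\Lambda_s^{r_1,r_2}$ is a $G$-equivariant map $L^2(X)\to L^2(X)$ sending $L^2(X_{r_1})_s$ into $L^2(X_{r_2})_s$ and vanishing on its orthogonal complement, with kernel $\lambda$ defined on integers $\max(0,r_2-r_1)\le k\le\min(n-r_1,r_2)$ by $(\Lambda_s^{r_1,r_2}\psi)(x_2)=\sum_{x_1\in X_{r_1}}\lambda(|x_2\setminus x_1|)\psi(x_1)$. The kernel agrees on its domain with a unique polynomial of degree $s$ which is nonzero at $0$; $\Lambda_s^{r_1,r_2}$ is normalized so that this polynomial takes the value $1$ at $t=0$. Convention $\binom{n}{-1}=0$. *)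

theory Defs
  imports Complex_Main "HOL-Computational_Algebra.Polynomial" "HOL-Library.Cardinality"
begin

text \<open>Omega is the universe of a finite type 'a; X = Pow Omega = UNIV :: 'a set set;
  L2(X) = functions 'a set => complex.  G = S(Omega) = bijections of 'a.\<close>

type_synonym 'a L2 = "'a set \<Rightarrow> complex"

definition rho :: "('a \<Rightarrow> 'a) \<Rightarrow> 'a L2 \<Rightarrow> 'a L2" where
  "rho g \<psi> = (\<lambda>x. \<psi> (inv g ` x))"

definition inner_L2 :: "('a::finite) L2 \<Rightarrow> 'a L2 \<Rightarrow> complex" where
  "inner_L2 f h = (\<Sum>x\<in>UNIV. f x * cnj (h x))"

definition csubspace :: "'a L2 set \<Rightarrow> bool" where
  "csubspace V \<longleftrightarrow> (\<lambda>x. 0) \<in> V \<and> (\<forall>f\<in>V. \<forall>h\<in>V. (\<lambda>x. f x + h x) \<in> V)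
     \<and> (\<forall>c. \<forall>f\<in>V. (\<lambda>x. c * f x) \<in> V)"

definition G_invariant :: "'a L2 set \<Rightarrow> bool" where
  "G_invariant V \<longleftrightarrow> (\<forall>g. bij g \<longrightarrow> (\<forall>f\<in>V. rho g f \<in> V))"

definition G_subspace :: "'a L2 set \<Rightarrow> bool" where
  "G_subspace V \<longleftrightarrow> csubspace V \<and> G_invariant V"

definition G_irreducible :: "'a L2 set \<Rightarrow> bool" where
  "G_irreducible V \<longleftrightarrow> G_subspace V \<and> V \<noteq> {\<lambda>x. 0} \<and>
     (\<forall>W. G_subspace W \<and> W \<subseteq> V \<longrightarrow> W = {\<lambda>x. 0} \<or> W = V)"

definition clinear_on :: "'a L2 set \<Rightarrow> ('a L2 \<Rightarrow> 'a L2) \<Rightarrow> bool" where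
  "clinear_on V T \<longleftrightarrow> (\<forall>f\<in>V. \<forall>h\<in>V. \<forall>c. T (\<lambda>x. c * f x + h x) = (\<lambda>x. c * T f x + T h x))"

definition G_isomorphic :: "'a L2 set \<Rightarrow> 'a L2 set \<Rightarrow> bool" where
  "G_isomorphic V W \<longleftrightarrow> (\<exists>T. clinear_on V T \<and> bij_betw T V W \<and>
      (\<forall>g. bij g \<longrightarrow> (\<forall>f\<in>V. T (rho g f) = rho g (T f))))"

definition L2_level :: "nat \<Rightarrow> ('a::finite) L2 set" where
  "L2_level r = {\<psi>. \<forall>x. card x \<noteq> r \<longrightarrow> \<psi> x = 0}"

text \<open>Standard model of the irreducible representation of S_n attached to the partition
  (n-s,s), 2s <= n: the Specht module realised as the kernel of the "down" map
  L2(X_s) -> L2(X_{s-1}) (James' kernel intersection theorem).\<close>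
definition Specht_two_row :: "nat \<Rightarrow> ('a::finite) L2 set" where
  "Specht_two_row s = {\<psi>\<in>L2_level s. s \<ge> 1 \<longrightarrow>
      (\<forall>y::'a set. card y = s - 1 \<longrightarrow> (\<Sum>x\<in>{x. card x = s \<and> y \<subseteq> x}. \<psi> x) = 0)}"

definition L2_rs :: "nat \<Rightarrow> nat \<Rightarrow> ('a::finite) L2 set" where
  "L2_rs r s = (THE V. V \<subseteq> L2_level r \<and> G_irreducible V \<and> G_isomorphic V (Specht_two_row s))"

definition kernel_op :: "(nat \<Rightarrow> complex) \<Rightarrow> nat \<Rightarrow> nat \<Rightarrow> ('a::finite) L2 \<Rightarrow> 'a L2" where
  "kernel_op lam r1 r2 \<psi> = (\<lambda>x2. if card x2 = r2 then
      (\<Sum>x1\<in>{x1. card x1 = r1}. lam (card (x2 - x1)) * \<psi> x1) else 0)"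

definition op_trace :: "(('a::finite) L2 \<Rightarrow> 'a L2) \<Rightarrow> complex" where
  "op_trace T = (\<Sum>x\<in>UNIV. T (\<lambda>y. if y = x then 1 else 0) x)"

definition orth_proj :: "('a::finite) L2 set \<Rightarrow> 'a L2 \<Rightarrow> 'a L2" where
  "orth_proj V \<psi> = (THE u. u \<in> V \<and> (\<forall>\<phi>\<in>V. inner_L2 (\<lambda>x. \<psi> x - u x) \<phi> = 0))"

definition binom_int :: "nat \<Rightarrow> int \<Rightarrow> nat" where
  "binom_int n k = (if k < 0 then 0 else n choose nat k)"

end

theory Submission imports Defs begin


definition dl :: "'a set \<Rightarrow> 'a L2" where "dl y = (\<lambda>x. if x = y then 1 else 0)"

definition lin :: "('a L2 \<Rightarrow> 'a L2) \<Rightarrow> bool" where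
 "lin T \<longleftrightarrow> (\<forall>f g. T (\<lambda>x. f x + g x) = (\<lambda>x. T f x + T g x)) \<and> (\<forall>c f. T (\<lambda>x. c * f x) = (\<lambda>x. c * T f x))"

definition eqv :: "('a L2 \<Rightarrow> 'a L2) \<Rightarrow> bool" where
 "eqv T \<longleftrightarrow> (\<forall>g f. bij g \<longrightarrow> T (rho g f) = rho g (T f))"

definition lvl :: "nat \<Rightarrow> 'a L2 \<Rightarrow> 'a L2" where "lvl j f = (\<lambda>x. if card x = j then f x else 0)"

definition up :: "('a::finite) L2 \<Rightarrow> 'a L2" where
 "up f = (\<lambda>y. \<Sum>z\<in>UNIV. if z \<subseteq> y \<and> card z + 1 = card y then f z else 0)"

definition dn :: "('a::finite) L2 \<Rightarrow> 'a L2" where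
 "dn f = (\<lambda>y. \<Sum>x\<in>UNIV. if y \<subseteq> x \<and> card x = card y + 1 then f x else 0)"

lemma lin_add: "lin T \<Longrightarrow> T (\<lambda>x. f x + g x) = (\<lambda>x. T f x + T g x)"
  by (simp add: lin_def)
lemma lin_scale: "lin T \<Longrightarrow> T (\<lambda>x. c * f x) = (\<lambda>x. c * T f x)"
  by (simp add: lin_def)
lemma lin_zero: "lin T \<Longrightarrow> T (\<lambda>x. 0) = (\<lambda>x. 0)"
proof -
  assume T: "lin T"
  have "T (\<lambda>x. 0 * (\<lambda>x. 0) x) = (\<lambda>x. 0 * T (\<lambda>x. 0) x)" by (rule lin_scale[OF T])
  then show ?thesis by simp
qed
lemma lin_div: "lin T \<Longrightarrow> T (\<lambda>x. f x / c) = (\<lambda>x. T f x / c)"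
  using lin_scale[of T "inverse c" f] by (simp add: divide_inverse_commute)
lemma lin_diff: "lin T \<Longrightarrow> T (\<lambda>x. f x - g x) = (\<lambda>x. T f x - T g x)"
proof -
  assume T: "lin T"
  have "T (\<lambda>x. f x - g x) = T (\<lambda>x. f x + (\<lambda>x. (-1) * g x) x)" by simp
  also have "\<dots> = (\<lambda>x. T f x + T (\<lambda>x. (-1) * g x) x)" using lin_add[OF T, of f "\<lambda>x. (-1) * g x"] by simp
  also have "\<dots> = (\<lambda>x. T f x - T g x)" using lin_scale[OF T, of "-1" g] by simp
  finally show ?thesis .
qed
lemma lin_sum: assumes T: "lin T" and A: "finite A"
  shows "T (\<lambda>x. \<Sum>i\<in>A. g i x) = (\<lambda>x. \<Sum>i\<in>A. T (g i) x)"
  using A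
proof (induction A rule: finite_induct)
  case empty then show ?case by (simp add: lin_zero[OF T])
next
  case (insert a A)
  have "T (\<lambda>x. \<Sum>i\<in>insert a A. g i x) = T (\<lambda>x. g a x + (\<lambda>x. \<Sum>i\<in>A. g i x) x)"
    using insert by simp
  also have "\<dots> = (\<lambda>x. T (g a) x + T (\<lambda>x. \<Sum>i\<in>A. g i x) x)"
    using lin_add[OF T, of "g a" "\<lambda>x. \<Sum>i\<in>A. g i x"] by simp
  finally show ?case using insert by simp
qed
lemma lin_sum_scale: assumes T: "lin T" and A: "finite A"
  shows "T (\<lambda>x. \<Sum>i\<in>A. c i * g i x) = (\<lambda>x. \<Sum>i\<in>A. c i * T (g i) x)"
  using lin_sum[OF T A, of "\<lambda>i y. c i * g i y"] lin_scale[OF T] by simp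
lemma fun_exp: "(f::'a::finite L2) = (\<lambda>x. \<Sum>y\<in>UNIV. f y * dl y x)"
  by (auto simp: dl_def if_distrib cong: if_cong)
lemma lin_exp: "lin (T :: ('a::finite) L2 \<Rightarrow> 'a L2) \<Longrightarrow> T f = (\<lambda>x. \<Sum>y\<in>UNIV. f y * T (dl y) x)"
proof -
  assume T: "lin T"
  have "T f = T (\<lambda>x. \<Sum>y\<in>UNIV. f y * dl y x)" using fun_exp[of f] by simp
  also have "\<dots> = (\<lambda>x. \<Sum>y\<in>UNIV. f y * T (dl y) x)" by (rule lin_sum_scale[OF T]) simp
  finally show ?thesis .
qed
lemma lin_comp: "lin A \<Longrightarrow> lin B \<Longrightarrow> lin (\<lambda>f. A (B f))"
  unfolding lin_def by simp
lemma lin_id: "lin (\<lambda>f. f)" unfolding lin_def by simp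
lemma lin_funpow: "lin T \<Longrightarrow> lin (T ^^ m)"
proof (induction m)
  case 0 then show ?case by (simp add: lin_id[unfolded id_def[symmetric]] id_def lin_def)
next
  case (Suc m) then show ?case using lin_comp[of T "T^^m"] by (simp add: comp_def)
qed
lemma eqv_comp: "eqv A \<Longrightarrow> eqv B \<Longrightarrow> eqv (\<lambda>f. A (B f))"
  unfolding eqv_def by simp
lemma eqv_funpow: "eqv T \<Longrightarrow> eqv (T ^^ m)"
proof (induction m)
  case 0 then show ?case by (simp add: eqv_def)
next
  case (Suc m) then show ?case using eqv_comp[of T "T^^m"] by (simp add: comp_def)
qed

lemma bij_inv_img1: "bij g \<Longrightarrow> inv g ` (g ` y) = y"
  by (simp add: bij_is_inj image_inv_f_f)
lemma bij_inv_img2: "bij g \<Longrightarrow> g ` (inv g ` y) = y"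
  by (simp add: bij_is_surj image_f_inv_f)
lemma inv_img_iff: "bij g \<Longrightarrow> (inv g ` x = y) = (x = g ` y)"
proof
  assume g: "bij g" and "inv g ` x = y"
  then have "g ` y = g ` (inv g ` x)" by simp
  then show "x = g ` y" using bij_inv_img2[OF g] by simp
next
  assume g: "bij g" and "x = g ` y"
  then show "inv g ` x = y" using bij_inv_img1[OF g] by simp
qed
lemma rho_dl: "bij g \<Longrightarrow> rho g (dl y) = dl (g ` y)"
  unfolding rho_def dl_def
  by (rule ext) (simp only: inv_img_iff)
lemma rho_comp: assumes g: "bij g" and h: "bij h" shows "rho g (rho h f) = rho (g \<circ> h) f"
proof -
  have "inv (g \<circ> h) = inv h \<circ> inv g" using o_inv_distrib[OF g h] .
  then show ?thesis unfolding rho_def by (simp add: image_comp)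
qed

lemma bij_image_sets: assumes g: "bij g" shows "bij (\<lambda>z. g ` z)"
proof (rule bij_betw_byWitness[where f'="\<lambda>z. inv g ` z"])
  show "\<forall>a\<in>UNIV. inv g ` g ` a = a" using bij_inv_img1[OF g] by blast
  show "\<forall>a'\<in>UNIV. g ` inv g ` a' = a'" using bij_inv_img2[OF g] by blast
qed auto
lemma sum_reindex_img: "bij g \<Longrightarrow> (\<Sum>z\<in>UNIV. F z) = (\<Sum>z\<in>UNIV. F (g ` z))"
proof -
  assume "bij g"
  then have "bij_betw (\<lambda>z. g ` z) UNIV UNIV" using bij_image_sets by blast
  then show ?thesis by (rule sum.reindex_bij_betw[symmetric])
qed

lemma sum_if_add: "(\<Sum>z\<in>A. if P z then f z + g z else 0) = (\<Sum>z\<in>A. if P z then f z else 0) + (\<Sum>z\<in>A. if P z then (g z::complex) else 0)"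
  by (simp add: sum.distrib[symmetric] if_distrib cong: if_cong)
lemma sum_if_mult: "(\<Sum>z\<in>A. if P z then c * f z else 0) = c * (\<Sum>z\<in>A. if P z then (f z::complex) else 0)"
  by (simp add: sum_distrib_left) (rule sum.cong, auto)
lemma lin_up: "lin up" unfolding lin_def up_def
  by (simp add: sum_if_add sum_if_mult)
lemma lin_dn: "lin dn" unfolding lin_def dn_def
  by (simp add: sum_if_add sum_if_mult)
lemma lin_lvl: "lin (lvl j)" unfolding lin_def lvl_def by auto

lemma card_bij_img: "bij g \<Longrightarrow> card (g ` z) = card z"
  by (meson bij_betw_imp_inj_on bij_betw_subset card_image subset_UNIV)
lemma card_inv_img: "bij g \<Longrightarrow> card (inv g ` z) = card z"
  using card_bij_img bij_imp_bij_inv by blast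

lemma eqv_up: "eqv (up :: ('a::finite) L2 \<Rightarrow> _)"
  unfolding eqv_def
proof (intro allI impI ext)
  fix g :: "'a \<Rightarrow> 'a" and f y assume g: "bij g"
  have ig: "bij (inv g)" using g by (simp add: bij_imp_bij_inv)
  have "rho g (up f) y = (\<Sum>z\<in>UNIV. if z \<subseteq> inv g ` y \<and> card z + 1 = card (inv g ` y) then f z else 0)"
    by (simp add: rho_def up_def)
  also have "\<dots> = (\<Sum>z\<in>UNIV. if inv g ` z \<subseteq> inv g ` y \<and> card (inv g ` z) + 1 = card (inv g ` y) then f (inv g ` z) else 0)"
    by (rule sum_reindex_img[OF ig])
  also have "\<dots> = up (rho g f) y"
    using ig by (simp add: up_def rho_def bij_is_inj card_inv_img[OF g] inj_image_subset_iff)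
  finally show "up (rho g f) y = rho g (up f) y" by simp
qed

lemma eqv_dn: "eqv (dn :: ('a::finite) L2 \<Rightarrow> _)"
  unfolding eqv_def
proof (intro allI impI ext)
  fix g :: "'a \<Rightarrow> 'a" and f y assume g: "bij g"
  have ig: "bij (inv g)" using g by (simp add: bij_imp_bij_inv)
  have "rho g (dn f) y = (\<Sum>z\<in>UNIV. if inv g ` y \<subseteq> z \<and> card z = card (inv g ` y) + 1 then f z else 0)"
    by (simp add: rho_def dn_def)
  also have "\<dots> = (\<Sum>z\<in>UNIV. if inv g ` y \<subseteq> inv g ` z \<and> card (inv g ` z) = card (inv g ` y) + 1 then f (inv g ` z) else 0)"
    by (rule sum_reindex_img[OF ig])
  also have "\<dots> = dn (rho g f) y"
    using ig by (simp add: dn_def rho_def bij_is_inj card_inv_img[OF g] inj_image_subset_iff)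
  finally show "dn (rho g f) y = rho g (dn f) y" by simp
qed

lemma eqv_lvl: "eqv (lvl j :: ('a::finite) L2 \<Rightarrow> _)"
  unfolding eqv_def lvl_def rho_def
  by (auto intro!: ext simp: card_inv_img)



lemma sum_UNIV_if: "(\<Sum>z\<in>(UNIV::'b::finite set). if P z then F z else 0) = (\<Sum>z\<in>{z. P z}. F z)"
  by (simp add: sum.inter_filter[symmetric])

lemma up_alt: "up f y = (\<Sum>b\<in>y. (f::('a::finite) L2) (y - {b}))"
proof -
  have S: "{z. z \<subseteq> y \<and> card z + 1 = card y} = (\<lambda>b. y - {b}) ` y"
  proof (intro equalityI subsetI)
    fix z assume "z \<in> {z. z \<subseteq> y \<and> card z + 1 = card y}"
    then have zy: "z \<subseteq> y" and c: "card z + 1 = card y" by auto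
    have "card (y - z) = 1" using card_Diff_subset[OF finite_subset[OF zy] zy] c by simp
    then obtain b where b: "y - z = {b}" using card_1_singletonE by blast
    then have "b \<in> y" "z = y - {b}" using zy by auto
    then show "z \<in> (\<lambda>b. y - {b}) ` y" by blast
  next
    fix z assume "z \<in> (\<lambda>b. y - {b}) ` y"
    then obtain b where "b \<in> y" "z = y - {b}" by blast
    then show "z \<in> {z. z \<subseteq> y \<and> card z + 1 = card y}"
    proof -
      assume "b \<in> y" "z = y - {b}"
      moreover have "card (y - {b}) + 1 = card y" using \<open>b \<in> y\<close> card_Diff_singleton[of b y]
        by (simp add: card_gt_0_iff) (metis One_nat_def Suc_pred card_gt_0_iff empty_iff finite)
      ultimately show ?thesis by auto
    qed
  qed
  have I: "inj_on (\<lambda>b. y - {b}) y" by (auto simp: inj_on_def)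
  have "up f y = (\<Sum>z\<in>{z. z \<subseteq> y \<and> card z + 1 = card y}. f z)"
    by (simp add: up_def sum_UNIV_if)
  also have "\<dots> = (\<Sum>b\<in>y. f (y - {b}))" unfolding S by (simp add: sum.reindex[OF I])
  finally show ?thesis .
qed

lemma dn_alt: "dn f y = (\<Sum>a\<in>-y. (f::('a::finite) L2) (insert a y))"
proof -
  have S: "{x. y \<subseteq> x \<and> card x = card y + 1} = (\<lambda>a. insert a y) ` (-y)"
  proof (intro equalityI subsetI)
    fix z assume "z \<in> {x. y \<subseteq> x \<and> card x = card y + 1}"
    then have zy: "y \<subseteq> z" and c: "card z = card y + 1" by auto
    have "card (z - y) = 1" using card_Diff_subset[OF finite_subset[OF zy] zy] c by simp
    then obtain b where b: "z - y = {b}" using card_1_singletonE by blast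
    then have "b \<in> -y" "z = insert b y" using zy by auto
    then show "z \<in> (\<lambda>a. insert a y) ` (-y)" by blast
  next
    fix z assume "z \<in> (\<lambda>a. insert a y) ` (-y)"
    then obtain b where "b \<notin> y" "z = insert b y" by blast
    then show "z \<in> {x. y \<subseteq> x \<and> card x = card y + 1}" by auto
  qed
  have I: "inj_on (\<lambda>a. insert a y) (-y)" unfolding inj_on_def by blast
  have "dn f y = (\<Sum>z\<in>{x. y \<subseteq> x \<and> card x = card y + 1}. f z)"
    by (simp add: dn_def sum_UNIV_if)
  also have "\<dots> = (\<Sum>a\<in>-y. f (insert a y))" unfolding S by (simp add: sum.reindex[OF I])
  finally show ?thesis .
qed

lemma comm_dn_up: "dn (up f) y = up (dn f) y + (of_nat CARD('a) - 2 * of_nat (card y)) * (f::('a::finite) L2) y"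
proof -
  define X where "X = (\<Sum>a\<in>-y. \<Sum>b\<in>y. f (insert a (y - {b})))"
  have "dn (up f) y = (\<Sum>a\<in>-y. \<Sum>b\<in>insert a y. f (insert a y - {b}))"
    by (simp add: dn_alt up_alt)
  also have "\<dots> = (\<Sum>a\<in>-y. f y + (\<Sum>b\<in>y. f (insert a (y - {b}))))"
  proof (rule sum.cong[OF refl])
    fix a assume a: "a \<in> -y"
    have "(\<Sum>b\<in>insert a y. f (insert a y - {b})) = f (insert a y - {a}) + (\<Sum>b\<in>y. f (insert a y - {b}))"
      using a by (simp add: sum.insert)
    also have "(\<Sum>b\<in>y. f (insert a y - {b})) = (\<Sum>b\<in>y. f (insert a (y - {b})))"
      using a by (intro sum.cong) (auto simp: insert_Diff_if)
    also have "insert a y - {a} = y" using a by auto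
    finally show "(\<Sum>b\<in>insert a y. f (insert a y - {b})) = f y + (\<Sum>b\<in>y. f (insert a (y - {b})))" .
  qed
  also have "\<dots> = of_nat (card (-y)) * f y + X" by (simp add: sum.distrib X_def)
  finally have L: "dn (up f) y = of_nat (card (-y)) * f y + X" .
  have "up (dn f) y = (\<Sum>b\<in>y. \<Sum>a\<in>-(y - {b}). f (insert a (y - {b})))"
    by (simp add: dn_alt up_alt)
  also have "\<dots> = (\<Sum>b\<in>y. f y + (\<Sum>a\<in>-y. f (insert a (y - {b}))))"
  proof (rule sum.cong[OF refl])
    fix b assume b: "b \<in> y"
    have e: "-(y - {b}) = insert b (-y)" using b by auto
    have "(\<Sum>a\<in>-(y - {b}). f (insert a (y - {b}))) = f (insert b (y - {b})) + (\<Sum>a\<in>-y. f (insert a (y - {b})))"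
      unfolding e using b by (simp add: sum.insert)
    also have "insert b (y - {b}) = y" using b by auto
    finally show "(\<Sum>a\<in>-(y - {b}). f (insert a (y - {b}))) = f y + (\<Sum>a\<in>-y. f (insert a (y - {b})))" .
  qed
  also have "\<dots> = of_nat (card y) * f y + (\<Sum>b\<in>y. \<Sum>a\<in>-y. f (insert a (y - {b})))" by (simp add: sum.distrib)
  also have "(\<Sum>b\<in>y. \<Sum>a\<in>-y. f (insert a (y - {b}))) = X" unfolding X_def by (rule sum.swap)
  finally have R: "up (dn f) y = of_nat (card y) * f y + X" .
  have cy: "card (-y) = CARD('a) - card y" by (simp add: Compl_eq_Diff_UNIV card_Diff_subset)
  have le: "card y \<le> CARD('a)" by (simp add: card_mono)
  show ?thesis unfolding L R cy using le by (simp add: of_nat_diff algebra_simps)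
qed



definition Spe :: "nat \<Rightarrow> ('a::finite) L2 set" where
  "Spe j = {f. f \<in> L2_level j \<and> dn f = (\<lambda>x. 0)}"

fun cc :: "nat \<Rightarrow> nat \<Rightarrow> nat \<Rightarrow> complex" where
  "cc N j 0 = 1"
| "cc N j (Suc m) = of_nat (Suc m) * (of_nat N - 2 * of_nat j - of_nat m) * cc N j m"

lemma up_level: "f \<in> L2_level j \<Longrightarrow> up f \<in> L2_level (Suc j)"
  unfolding L2_level_def up_def by (auto intro!: sum.neutral)

lemma uppow_level: "f \<in> L2_level j \<Longrightarrow> (up^^m) f \<in> L2_level (j+m)"
  by (induction m) (auto simp: up_level)

lemma dn_level: "f \<in> L2_level (Suc j) \<Longrightarrow> dn f \<in> L2_level j"
  unfolding L2_level_def dn_def by (auto intro!: sum.neutral)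

lemma dn_level0: "f \<in> L2_level 0 \<Longrightarrow> dn f = (\<lambda>x. 0)"
  unfolding L2_level_def dn_def by (auto intro!: sum.neutral ext) (metis card.empty nat.distinct(1))

lemma dnpow_level: "f \<in> L2_level (j + m) \<Longrightarrow> (dn^^m) f \<in> L2_level j"
proof (induction m arbitrary: f)
  case 0 then show ?case by simp
next
  case (Suc m)
  have "dn f \<in> L2_level (j + m)" using dn_level[of f "j+m"] Suc.prems by simp
  then have "(dn^^m) (dn f) \<in> L2_level j" using Suc.IH by blast
  then show ?case by (simp add: funpow_Suc_right del: funpow.simps)
qed

lemma lvl_level: "lvl j f \<in> L2_level j" by (simp add: lvl_def L2_level_def)
lemma lvl_id: "f \<in> L2_level j \<Longrightarrow> lvl j f = f" by (auto simp: lvl_def L2_level_def)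

lemma dn_lvl: "dn (lvl (Suc j) f) = lvl j (dn f)"
  unfolding dn_def lvl_def by (auto intro!: ext sum.cong sum.neutral)

lemma dnpow_lvl: "(dn^^m) (lvl (j+m) f) = lvl j ((dn^^m) f)"
proof (induction m arbitrary: f)
  case 0 then show ?case by simp
next
  case (Suc m)
  have "(dn^^Suc m) (lvl (j + Suc m) f) = (dn^^m) (dn (lvl (Suc (j + m)) f))"
    by (simp add: funpow_Suc_right del: funpow.simps)
  also have "\<dots> = (dn^^m) (lvl (j+m) (dn f))" by (simp add: dn_lvl)
  also have "\<dots> = lvl j ((dn^^m) (dn f))" by (rule Suc.IH)
  finally show ?case by (simp add: funpow_Suc_right del: funpow.simps)
qed

lemma dnpow_zero: "dn f = (\<lambda>x. 0) \<Longrightarrow> (dn^^Suc m) f = (\<lambda>x. 0)"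
  by (simp add: funpow_Suc_right lin_zero[OF lin_funpow[OF lin_dn]] del: funpow.simps)

lemma dn_up_harm:
  assumes f: "f \<in> Spe j"
  shows "dn ((up^^Suc m) f) = (\<lambda>x. of_nat (Suc m) * (of_nat CARD('a) - 2*of_nat j - of_nat m) * (up^^m) (f::('a::finite) L2) x)"
proof (induction m)
  case 0
  have fl: "f \<in> L2_level j" and fd: "dn f = (\<lambda>x. 0)" using f by (auto simp: Spe_def)
  show ?case
  proof
    fix x
    have "dn ((up^^Suc 0) f) x = up (dn f) x + (of_nat CARD('a) - 2 * of_nat (card x)) * f x"
      by (simp add: comm_dn_up)
    also have "\<dots> = (of_nat CARD('a) - 2 * of_nat j) * f x"
      using fl by (cases "card x = j") (auto simp: fd lin_zero[OF lin_up] L2_level_def)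
    finally show "dn ((up^^Suc 0) f) x = of_nat (Suc 0) * (of_nat CARD('a) - 2*of_nat j - of_nat 0) * (up^^0) f x"
      by simp
  qed
next
  case (Suc m)
  define g where "g = (up^^Suc m) f"
  have gl: "g \<in> L2_level (j + Suc m)" using uppow_level[of f j "Suc m"] f by (simp add: Spe_def g_def del: funpow.simps)
  define k :: complex where "k = of_nat (Suc m) * (of_nat CARD('a) - 2*of_nat j - of_nat m)"
  show ?case
  proof
    fix x
    have "dn ((up^^Suc (Suc m)) f) x = dn (up g) x" by (simp add: g_def)
    also have "\<dots> = up (dn g) x + (of_nat CARD('a) - 2 * of_nat (card x)) * g x"
      by (simp add: comm_dn_up)
    also have "up (dn g) = up (\<lambda>x. k * (up^^m) f x)" using Suc.IH by (simp add: g_def k_def)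
    also have "\<dots> = (\<lambda>x. k * g x)" by (simp add: lin_scale[OF lin_up] g_def)
    also have "(of_nat CARD('a) - 2 * of_nat (card x)) * g x = (of_nat CARD('a) - 2 * of_nat (j + Suc m)) * g x"
      using gl by (cases "card x = j + Suc m") (auto simp: L2_level_def)
    finally have "dn ((up^^Suc (Suc m)) f) x = (k + (of_nat CARD('a) - 2 * of_nat (j + Suc m))) * g x"
      by (simp add: algebra_simps)
    also have "k + (of_nat CARD('a) - 2 * of_nat (j + Suc m)) = of_nat (Suc (Suc m)) * (of_nat CARD('a) - 2*of_nat j - of_nat (Suc m))"
      by (simp add: k_def algebra_simps)
    finally show "dn ((up^^Suc (Suc m)) f) x = of_nat (Suc (Suc m)) * (of_nat CARD('a) - 2*of_nat j - of_nat (Suc m)) * (up^^Suc m) f x"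
      by (simp add: g_def)
  qed
qed

lemma dnup_pow:
  assumes f: "f \<in> Spe j"
  shows "(dn^^m) ((up^^m) f) = (\<lambda>x. cc CARD('a) j m * (f::('a::finite) L2) x)"
proof (induction m)
  case 0 then show ?case by simp
next
  case (Suc m)
  have "(dn^^Suc m) ((up^^Suc m) f) = (dn^^m) (dn ((up^^Suc m) f))"
    by (simp add: funpow_Suc_right del: funpow.simps)
  also have "\<dots> = (dn^^m) (\<lambda>x. (of_nat (Suc m) * (of_nat CARD('a) - 2*of_nat j - of_nat m)) * (up^^m) f x)"
    by (simp only: dn_up_harm[OF f])
  also have "\<dots> = (\<lambda>x. (of_nat (Suc m) * (of_nat CARD('a) - 2*of_nat j - of_nat m)) * (dn^^m) ((up^^m) f) x)"
    by (rule lin_scale[OF lin_funpow[OF lin_dn]])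
  also have "\<dots> = (\<lambda>x. cc CARD('a) j (Suc m) * f x)" by (simp add: Suc.IH mult.assoc)
  finally show ?case .
qed

lemma cc_nz: "2*j + m \<le> N \<Longrightarrow> cc N j m \<noteq> 0"
proof (induction m)
  case 0 then show ?case by simp
next
  case (Suc m)
  have "(of_nat N - 2 * of_nat j - of_nat m :: complex) = of_nat (N - 2*j - m)"
    using Suc.prems by (simp add: of_nat_diff)
  moreover have "N - 2*j - m \<noteq> 0" using Suc.prems by simp
  ultimately have nz: "(of_nat N - 2 * of_nat j - of_nat m :: complex) \<noteq> 0" by (simp only: of_nat_eq_0_iff) simp
  have "cc N j m \<noteq> 0" using Suc by simp
  then show ?case using nz by (simp only: cc.simps mult_eq_0_iff of_nat_eq_0_iff) simp
qed

lemma if0_mult: "(if P then a else 0) * (c::complex) = (if P then a * c else 0)" by simp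
lemma mult_if0: "(c::complex) * (if P then a else 0) = (if P then c * a else 0)" by simp
lemma cnj_if0: "cnj (if P then a else 0) = (if P then cnj a else 0)" by simp

lemma inner_up: "inner_L2 (up u) h = inner_L2 u (dn (h::('a::finite) L2))"
proof -
  have "inner_L2 (up u) h = (\<Sum>y\<in>UNIV. \<Sum>z\<in>UNIV. if z \<subseteq> y \<and> card z + 1 = card y then u z * cnj (h y) else 0)"
    unfolding inner_L2_def up_def by (simp add: sum_distrib_right if0_mult)
  also have "\<dots> = (\<Sum>z\<in>UNIV. \<Sum>y\<in>UNIV. if z \<subseteq> y \<and> card z + 1 = card y then u z * cnj (h y) else 0)"
    by (rule sum.swap)
  also have "\<dots> = inner_L2 u (dn h)"
    unfolding inner_L2_def dn_def by (simp add: sum_distrib_left cnj_sum cnj_if0 mult_if0 eq_commute)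
  finally show ?thesis .
qed

lemma inner_uppow: "inner_L2 ((up^^m) u) h = inner_L2 u ((dn^^m) (h::('a::finite) L2))"
proof (induction m arbitrary: h)
  case 0 then show ?case by simp
next
  case (Suc m)
  have "inner_L2 ((up^^Suc m) u) h = inner_L2 ((up^^m) u) (dn h)" by (simp add: inner_up)
  also have "\<dots> = inner_L2 u ((dn^^m) (dn h))" by (rule Suc.IH)
  finally show ?case by (simp add: funpow_Suc_right del: funpow.simps)
qed

lemma inner_diff_left: "inner_L2 (\<lambda>x. f x - g x) h = inner_L2 f h - inner_L2 g h"
  unfolding inner_L2_def by (simp add: algebra_simps sum_subtractf)
lemma inner_scale_left: "inner_L2 (\<lambda>x. c * f x) h = c * inner_L2 f h"
  unfolding inner_L2_def by (simp add: algebra_simps sum_distrib_left)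
lemma inner_div_left: "inner_L2 (\<lambda>x. f x / c) h = inner_L2 f h / c"
  unfolding inner_L2_def by (simp add: sum_divide_distrib)
lemma inner_sum_left: "inner_L2 (\<lambda>x. \<Sum>i\<in>A. g i x) h = (\<Sum>i\<in>A. inner_L2 (g i) h)"
  unfolding inner_L2_def by (simp add: sum_distrib_right sum.swap[of _ A])
lemma inner_zero_right: "inner_L2 f (\<lambda>x. 0) = 0" unfolding inner_L2_def by simp
lemma inner_self_0: "inner_L2 f f = 0 \<Longrightarrow> f = (\<lambda>x. 0::complex)"
proof -
  assume "inner_L2 f f = 0"
  moreover have "inner_L2 f f = complex_of_real (\<Sum>x\<in>UNIV. (Re (f x))^2 + (Im (f x))^2)"
    unfolding inner_L2_def by (simp only: complex_mult_cnj of_real_sum)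
  ultimately have "(\<Sum>x\<in>UNIV. (Re (f x))^2 + (Im (f x))^2) = 0" by (simp only: of_real_eq_0_iff)
  then have "\<forall>x\<in>UNIV. (Re (f x))^2 + (Im (f x))^2 = 0" by (subst (asm) sum_nonneg_eq_0_iff) auto
  then show ?thesis by (auto intro!: ext complex_eqI)
qed



function PP :: "nat \<Rightarrow> ('a::finite) L2 \<Rightarrow> 'a L2" where
  "PP j f = (\<lambda>x. lvl j f x - (\<Sum>i\<in>{..<j}. (up^^(j-i)) (PP i ((dn^^(j-i)) (lvl j f))) x / cc CARD('a) i (j-i)))"
  by auto
termination by (relation "measure fst") auto

declare PP.simps[simp del]

lemma lin_combo:
  assumes S: "lin S" and T: "\<forall>i\<in>A. lin (T i)" and A: "finite A"
  shows "lin (\<lambda>f x. S f x - (\<Sum>i\<in>A. T i f x / c i))"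
proof -
  have a: "\<And>f g. \<forall>i\<in>A. T i (\<lambda>x. f x + g x) = (\<lambda>x. T i f x + T i g x)" using T lin_add by blast
  have b: "\<And>d f. \<forall>i\<in>A. T i (\<lambda>x. d * f x) = (\<lambda>x. d * T i f x)" using T lin_scale by blast
  show ?thesis unfolding lin_def
  proof (intro conjI allI ext)
    fix f g x
    have "(\<Sum>i\<in>A. T i (\<lambda>x. f x + g x) x / c i) = (\<Sum>i\<in>A. T i f x / c i) + (\<Sum>i\<in>A. T i g x / c i)"
      using a[of f g] by (simp add: sum.distrib[symmetric] add_divide_distrib)
    then show "S (\<lambda>x. f x + g x) x - (\<Sum>i\<in>A. T i (\<lambda>x. f x + g x) x / c i) =
         S f x - (\<Sum>i\<in>A. T i f x / c i) + (S g x - (\<Sum>i\<in>A. T i g x / c i))"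
      by (simp add: lin_add[OF S])
  next
    fix d f x
    have "(\<Sum>i\<in>A. T i (\<lambda>x. d * f x) x / c i) = d * (\<Sum>i\<in>A. T i f x / c i)"
      using b[of d f] by (simp add: sum_distrib_left)
    then show "S (\<lambda>x. d * f x) x - (\<Sum>i\<in>A. T i (\<lambda>x. d * f x) x / c i) = d * (S f x - (\<Sum>i\<in>A. T i f x / c i))"
      by (simp add: lin_scale[OF S] right_diff_distrib)
  qed
qed

lemma eqv_combo:
  assumes S: "eqv S" and T: "\<forall>i\<in>A. eqv (T i)"
  shows "eqv (\<lambda>f x. S f x - (\<Sum>i\<in>A. T i f x / c i))"
  unfolding eqv_def
proof (intro allI impI ext)
  fix g :: "'a \<Rightarrow> 'a" and f x assume g: "bij g"
  have "\<forall>i\<in>A. T i (rho g f) = rho g (T i f)" using T g by (simp add: eqv_def)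
  then show "S (rho g f) x - (\<Sum>i\<in>A. T i (rho g f) x / c i) =
       rho g (\<lambda>x. S f x - (\<Sum>i\<in>A. T i f x / c i)) x"
    using S g by (simp add: eqv_def rho_def)
qed

lemma PP_eq: "(PP j :: ('a::finite) L2 \<Rightarrow> _) = (\<lambda>f x. lvl j f x - (\<Sum>i\<in>{..<j}. (\<lambda>f. (up^^(j-i)) (PP i ((dn^^(j-i)) (lvl j f)))) f x / cc CARD('a) i (j-i)))"
  by (rule ext, subst PP.simps) simp

lemma lin_PP: "lin (PP j :: ('a::finite) L2 \<Rightarrow> _)"
proof (induction j rule: less_induct)
  case (less j)
  have "\<forall>i\<in>{..<j}. lin (\<lambda>f. (up^^(j-i)) (PP i ((dn^^(j-i)) (lvl j (f::'a L2)))))"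
  proof
    fix i assume "i \<in> {..<j}"
    then have "lin (PP i :: 'a L2 \<Rightarrow> _)" using less by simp
    then show "lin (\<lambda>f. (up^^(j-i)) (PP i ((dn^^(j-i)) (lvl j (f::'a L2)))))"
      by (intro lin_comp[OF lin_funpow[OF lin_up]] lin_comp[OF _ lin_comp[OF lin_funpow[OF lin_dn] lin_lvl]])
  qed
  then show ?case by (subst PP_eq) (rule lin_combo[OF lin_lvl], simp_all)
qed

lemma eqv_PP: "eqv (PP j :: ('a::finite) L2 \<Rightarrow> _)"
proof (induction j rule: less_induct)
  case (less j)
  have "\<forall>i\<in>{..<j}. eqv (\<lambda>f. (up^^(j-i)) (PP i ((dn^^(j-i)) (lvl j (f::'a L2)))))"
  proof
    fix i assume "i \<in> {..<j}"
    then have "eqv (PP i :: 'a L2 \<Rightarrow> _)" using less by simp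
    then show "eqv (\<lambda>f. (up^^(j-i)) (PP i ((dn^^(j-i)) (lvl j (f::'a L2)))))"
      by (intro eqv_comp[OF eqv_funpow[OF eqv_up]] eqv_comp[OF _ eqv_comp[OF eqv_funpow[OF eqv_dn] eqv_lvl]])
  qed
  then show ?case by (subst PP_eq) (rule eqv_combo[OF eqv_lvl], simp_all)
qed

lemma level_diff_sum:
  assumes "f \<in> L2_level j" "\<forall>i\<in>A. g i \<in> L2_level j"
  shows "(\<lambda>x. f x - (\<Sum>i\<in>A. g i x / c i)) \<in> L2_level j"
  using assms by (auto simp: L2_level_def)

lemma PP_level: "PP j f \<in> L2_level j"
proof (induction j arbitrary: f rule: less_induct)
  case (less j)
  have "\<forall>i\<in>{..<j}. (up^^(j-i)) (PP i ((dn^^(j-i)) (lvl j f))) \<in> L2_level j"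
  proof
    fix i assume "i \<in> {..<j}"
    then have e: "i + (j - i) = j" by simp
    have "PP i ((dn^^(j-i)) (lvl j f)) \<in> L2_level i" using less \<open>i \<in> {..<j}\<close> by simp
    then have "(up^^(j-i)) (PP i ((dn^^(j-i)) (lvl j f))) \<in> L2_level (i + (j-i))" by (rule uppow_level)
    then show "(up^^(j-i)) (PP i ((dn^^(j-i)) (lvl j f))) \<in> L2_level j" unfolding e .
  qed
  then show ?case by (subst PP.simps) (rule level_diff_sum[OF lvl_level])
qed

lemma lvl_lvl: "lvl j (lvl j f) = lvl j f" by (rule ext) (simp add: lvl_def)
lemma PP_lvl: "PP j (lvl j f) = PP j f"
  by (subst (1 2) PP.simps) (simp only: lvl_lvl)

lemma PP_fix: assumes f: "f \<in> Spe j" shows "PP j f = f"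
proof -
  have fl: "lvl j f = f" using f by (simp add: Spe_def lvl_id)
  have fd: "dn f = (\<lambda>x. 0)" using f by (simp add: Spe_def)
  have "\<forall>i\<in>{..<j}. (up^^(j-i)) (PP i ((dn^^(j-i)) f)) = (\<lambda>x. 0)"
  proof
    fix i assume "i \<in> {..<j}"
    then have "j - i = Suc (j - i - 1)" by simp
    then have "(dn^^(j-i)) f = (\<lambda>x. 0)" using dnpow_zero[OF fd, of "j-i-1"] by simp
    then show "(up^^(j-i)) (PP i ((dn^^(j-i)) f)) = (\<lambda>x. 0)"
      by (simp add: lin_zero[OF lin_PP] lin_zero[OF lin_funpow[OF lin_up]])
  qed
  then show ?thesis by (subst PP.simps) (simp add: fl)
qed



lemma lin_app_combo:
  assumes D: "lin D" and A: "finite A"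
  shows "D (\<lambda>x. S x - (\<Sum>i\<in>A. T i x / c i)) = (\<lambda>x. D S x - (\<Sum>i\<in>A. D (T i) x / c i))"
proof -
  have "D (\<lambda>x. S x - (\<Sum>i\<in>A. T i x / c i)) = (\<lambda>x. D S x - D (\<lambda>x. \<Sum>i\<in>A. T i x / c i) x)"
    by (rule lin_diff[OF D])
  also have "D (\<lambda>x. \<Sum>i\<in>A. T i x / c i) = (\<lambda>x. \<Sum>i\<in>A. D (\<lambda>x. T i x / c i) x)"
    by (rule lin_sum[OF D A])
  also have "\<dots> = (\<lambda>x. \<Sum>i\<in>A. D (T i) x / c i)" by (simp add: lin_div[OF D])
  finally show ?thesis .
qed

lemma PP_Spe_aux: "PP j f \<in> L2_level j" by (rule PP_level)

lemma PP_dn: "2 * j \<le> CARD('a) \<Longrightarrow> dn (PP j (f::('a::finite) L2)) = (\<lambda>x. 0)"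
proof (induction j arbitrary: f rule: less_induct)
  case (less j)
  show ?case
  proof (cases j)
    case 0 then show ?thesis using PP_level[of 0 f] dn_level0 by simp
  next
    case (Suc k)
    define F where "F = lvl (Suc k) f"
    define N where "N = CARD('a)"
    have jk: "2 * Suc k \<le> N" using less.prems Suc N_def by simp
    have T: "\<forall>i\<in>{..<Suc k}. dn ((up^^(Suc k - i)) (PP i ((dn^^(Suc k - i)) F))) x / cc N i (Suc k - i)
              = (up^^(k - i)) (PP i ((dn^^(k-i)) (lvl k (dn f)))) x / cc N i (k-i)" for x
    proof
      fix i assume "i \<in> {..<Suc k}"
      then have ik: "i \<le> k" by simp
      define m where "m = k - i"
      have sm: "Suc k - i = Suc m" using ik m_def by simp
      define g where "g = PP i ((dn^^(Suc m)) F)"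
      have gS: "g \<in> Spe i" unfolding Spe_def g_def
        using PP_level less.IH[of i] ik Suc jk N_def by auto
      define co :: complex where "co = of_nat (Suc m) * (of_nat N - 2*of_nat i - of_nat m)"
      have h: "dn ((up^^Suc m) g) = (\<lambda>x. co * (up^^m) g x)"
        using dn_up_harm[OF gS, of m] by (simp add: co_def N_def)
      have cce: "cc N i (Suc m) = co * cc N i m" by (simp add: co_def)
      have "(of_nat N - 2*of_nat i - of_nat m :: complex) = of_nat (N - 2*i - m)"
        using jk ik m_def by (simp add: of_nat_diff)
      moreover have "N - 2*i - m \<noteq> 0" using jk ik m_def by simp
      ultimately have X: "(of_nat N - 2*of_nat i - of_nat m :: complex) \<noteq> 0" by (simp only: of_nat_eq_0_iff) simp
      have a1: "(of_nat (Suc m)::complex) \<noteq> 0" by (simp only: of_nat_eq_0_iff)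
      have con: "co \<noteq> 0" unfolding co_def using a1 X by (rule no_zero_divisors)
      have dd: "(dn^^(Suc m)) F = (dn^^m) (lvl k (dn f))"
        by (simp add: funpow_Suc_right F_def dn_lvl del: funpow.simps)
      have gg: "g = PP i ((dn^^m) (lvl k (dn f)))" unfolding g_def dd ..
      show "dn ((up^^(Suc k - i)) (PP i ((dn^^(Suc k - i)) F))) x / cc N i (Suc k - i)
              = (up^^(k - i)) (PP i ((dn^^(k-i)) (lvl k (dn f)))) x / cc N i (k-i)"
        unfolding sm m_def[symmetric] g_def[symmetric] h cce gg[symmetric] using con
        by simp
    qed
    have "dn (PP j f) = dn (\<lambda>x. F x - (\<Sum>i\<in>{..<Suc k}. (up^^(Suc k - i)) (PP i ((dn^^(Suc k - i)) F)) x / cc N i (Suc k - i)))"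
      by (subst PP.simps) (simp add: Suc F_def N_def)
    also have "\<dots> = (\<lambda>x. dn F x - (\<Sum>i\<in>{..<Suc k}. dn ((up^^(Suc k - i)) (PP i ((dn^^(Suc k - i)) F))) x / cc N i (Suc k - i)))"
      by (rule lin_app_combo[OF lin_dn]) simp
    also have "\<dots> = (\<lambda>x. lvl k (dn f) x - (\<Sum>i\<in>{..<Suc k}. (up^^(k - i)) (PP i ((dn^^(k-i)) (lvl k (dn f)))) x / cc N i (k-i)))"
      using T by (simp add: F_def dn_lvl)
    also have "\<dots> = (\<lambda>x. lvl k (dn f) x - (\<Sum>i\<in>{..<k}. (up^^(k - i)) (PP i ((dn^^(k-i)) (lvl k (dn f)))) x / cc N i (k-i)) - PP k (lvl k (dn f)) x)"
      by (simp add: algebra_simps)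
    also have "PP k (lvl k (dn f)) = (\<lambda>x. lvl k (dn f) x - (\<Sum>i\<in>{..<k}. (up^^(k - i)) (PP i ((dn^^(k-i)) (lvl k (dn f)))) x / cc N i (k-i)))"
      by (subst PP.simps) (simp add: N_def lvl_lvl)
    also have "(\<lambda>x. lvl k (dn f) x - (\<Sum>i\<in>{..<k}. (up^^(k - i)) (PP i ((dn^^(k-i)) (lvl k (dn f)))) x / cc N i (k-i)) - (\<lambda>x. lvl k (dn f) x - (\<Sum>i\<in>{..<k}. (up^^(k - i)) (PP i ((dn^^(k-i)) (lvl k (dn f)))) x / cc N i (k-i))) x) = (\<lambda>x. 0)"
      by simp
    finally show ?thesis .
  qed
qed

lemma PP_Spe: "2 * j \<le> CARD('a) \<Longrightarrow> PP j (f::('a::finite) L2) \<in> Spe j"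
  by (simp add: Spe_def PP_level PP_dn)

lemma inner_add_left: "inner_L2 (\<lambda>x. f x + g x) h = inner_L2 f h + inner_L2 g h"
  unfolding inner_L2_def by (simp add: algebra_simps sum.distrib)

lemma PP_perp:
  assumes h: "h \<in> Spe j"
  shows "inner_L2 (\<lambda>x. f x - PP j f x) h = 0"
proof -
  define N where "N = CARD('a)"
  have hl: "h \<in> L2_level j" and hd: "dn h = (\<lambda>x. 0)" using h by (auto simp: Spe_def)
  have e: "(\<lambda>x. f x - PP j f x) = (\<lambda>x. (f x - lvl j f x) + (\<Sum>i\<in>{..<j}. (up^^(j-i)) (PP i ((dn^^(j-i)) (lvl j f))) x / cc N i (j-i)))"
    by (rule ext, subst PP.simps) (simp add: N_def)
  have z1: "inner_L2 (\<lambda>x. f x - lvl j f x) h = 0"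
    unfolding inner_L2_def using hl by (intro sum.neutral) (auto simp: lvl_def L2_level_def)
  have z2: "inner_L2 ((up^^(j-i)) u) h = 0" if "i \<in> {..<j}" for i u
  proof -
    have "j - i = Suc (j - i - 1)" using that by simp
    then have "(dn^^(j-i)) h = (\<lambda>x. 0)" using dnpow_zero[OF hd, of "j-i-1"] by simp
    then show ?thesis by (simp add: inner_uppow inner_zero_right)
  qed
  show ?thesis unfolding e inner_add_left inner_sum_left inner_div_left z1
    using z2 by simp
qed

lemma tr_def: "op_trace T = (\<Sum>x\<in>UNIV. T (dl x) x)"
  by (simp add: op_trace_def dl_def)

lemma tr_combo:
  assumes A: "finite A"
  shows "op_trace (\<lambda>f x. S f x - (\<Sum>i\<in>A. T i f x / c i)) = op_trace S - (\<Sum>i\<in>A. op_trace (T i) / c i)"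
  unfolding tr_def by (simp add: sum_subtractf sum_divide_distrib[symmetric] sum.swap[of _ A])

lemma tr_cyc:
  assumes A: "lin A" and B: "lin B"
  shows "op_trace (\<lambda>f. A (B f)) = op_trace (\<lambda>f. B (A (f::('a::finite) L2)))"
proof -
  have "op_trace (\<lambda>f. A (B f)) = (\<Sum>x\<in>UNIV. \<Sum>y\<in>UNIV. B (dl x) y * A (dl y) x)"
    unfolding tr_def by (subst lin_exp[OF A]) simp
  also have "\<dots> = (\<Sum>y\<in>UNIV. \<Sum>x\<in>UNIV. B (dl x) y * A (dl y) x)" by (rule sum.swap)
  also have "\<dots> = op_trace (\<lambda>f. B (A f))"
    unfolding tr_def by (subst lin_exp[OF B]) (simp add: mult.commute)
  finally show ?thesis .
qed

lemma tr_scale: "op_trace (\<lambda>f x. c * T f x) = c * op_trace T"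
  unfolding tr_def by (simp add: sum_distrib_left)

lemma tr_lvl: "op_trace (lvl j :: ('a::finite) L2 \<Rightarrow> _) = of_nat (CARD('a) choose j)"
proof -
  have "op_trace (lvl j :: ('a::finite) L2 \<Rightarrow> _) = (\<Sum>x\<in>(UNIV::'a set set). if card x = j then 1 else 0)"
    unfolding tr_def by (rule sum.cong) (auto simp: lvl_def dl_def)
  also have "\<dots> = of_nat (card {x::'a set. card x = j})" by (simp add: sum.If_cases)
  also have "{x::'a set. card x = j} = {B. B \<subseteq> UNIV \<and> card B = j}" by simp
  also have "card \<dots> = CARD('a) choose j" by (rule n_subsets) simp
  finally show ?thesis .
qed



lemma tr_term:
  assumes ij: "i < j" and jN: "2 * j \<le> CARD('a)"
  shows "op_trace (\<lambda>f. (up^^(j-i)) (PP i ((dn^^(j-i)) (lvl j (f::('a::finite) L2))))) = cc CARD('a) i (j-i) * op_trace (PP i :: 'a L2 \<Rightarrow> _)"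
proof -
  define m where "m = j - i"
  have jm: "j = i + m" using ij m_def by simp
  have iN: "2 * i \<le> CARD('a)" using ij jN by simp
  have linB: "lin (\<lambda>f. PP i ((dn^^m) (lvl j (f::'a L2))))"
    by (intro lin_comp[OF lin_PP] lin_comp[OF lin_funpow[OF lin_dn] lin_lvl])
  have "op_trace (\<lambda>f. (up^^m) (PP i ((dn^^m) (lvl j (f::'a L2))))) = op_trace (\<lambda>f. (\<lambda>f. PP i ((dn^^m) (lvl j f))) ((up^^m) (f::'a L2)))"
    using tr_cyc[where 'a='a, OF lin_funpow[OF lin_up, of m] linB] by simp
  also have "\<dots> = op_trace (\<lambda>f. PP i ((dn^^m) ((up^^m) (f::'a L2))))"
    by (simp add: jm dnpow_lvl PP_lvl)
  also have "\<dots> = op_trace (\<lambda>f. (dn^^m) ((up^^m) (PP i (f::'a L2))))"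
    using tr_cyc[where 'a='a, OF lin_PP[of _] lin_comp[OF lin_funpow[OF lin_dn, of m] lin_funpow[OF lin_up, of m]]] by simp
  also have "\<dots> = op_trace (\<lambda>f x. cc CARD('a) i m * PP i (f::'a L2) x)"
    using dnup_pow[OF PP_Spe[OF iN]] by simp
  also have "\<dots> = cc CARD('a) i m * op_trace (PP i :: 'a L2 \<Rightarrow> _)" by (rule tr_scale)
  finally show ?thesis using m_def by simp
qed

lemma tr_PP_sum:
  assumes jN: "2 * j \<le> CARD('a)"
  shows "(\<Sum>i\<in>{..j}. op_trace (PP i :: ('a::finite) L2 \<Rightarrow> _)) = of_nat (CARD('a) choose j)"
proof -
  have "op_trace (PP j :: ('a::finite) L2 \<Rightarrow> _) = op_trace (lvl j :: 'a L2 \<Rightarrow> _) -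
     (\<Sum>i\<in>{..<j}. op_trace (\<lambda>f. (up^^(j-i)) (PP i ((dn^^(j-i)) (lvl j (f::'a L2))))) / cc CARD('a) i (j-i))"
    by (subst PP_eq) (rule tr_combo, simp)
  also have "(\<Sum>i\<in>{..<j}. op_trace (\<lambda>f. (up^^(j-i)) (PP i ((dn^^(j-i)) (lvl j (f::'a L2))))) / cc CARD('a) i (j-i))
     = (\<Sum>i\<in>{..<j}. op_trace (PP i :: 'a L2 \<Rightarrow> _))"
  proof (rule sum.cong[OF refl])
    fix i assume i: "i \<in> {..<j}"
    have "cc CARD('a) i (j-i) \<noteq> 0" using i jN by (intro cc_nz) simp
    then show "op_trace (\<lambda>f. (up^^(j-i)) (PP i ((dn^^(j-i)) (lvl j (f::'a L2))))) / cc CARD('a) i (j-i) = op_trace (PP i :: 'a L2 \<Rightarrow> _)"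
      using tr_term[of i j, where 'a='a] i jN by simp
  qed
  finally have "op_trace (PP j :: ('a::finite) L2 \<Rightarrow> _) = of_nat (CARD('a) choose j) - (\<Sum>i\<in>{..<j}. op_trace (PP i :: 'a L2 \<Rightarrow> _))"
    by (simp add: tr_lvl)
  then show ?thesis by (simp add: lessThan_Suc_atMost[symmetric])
qed

lemma tr_PP:
  assumes sN: "2 * s \<le> CARD('a)"
  shows "op_trace (PP s :: ('a::finite) L2 \<Rightarrow> _) = of_nat (CARD('a) choose s) - of_nat (binom_int CARD('a) (int s - 1))"
proof (cases s)
  case 0
  then show ?thesis using tr_PP_sum[of 0, where 'a='a] by (simp add: binom_int_def)
next
  case (Suc k)
  have "(\<Sum>i\<in>{..Suc k}. op_trace (PP i :: 'a L2 \<Rightarrow> _)) = of_nat (CARD('a) choose Suc k)"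
    using tr_PP_sum[of "Suc k", where 'a='a] sN Suc by simp
  moreover have "(\<Sum>i\<in>{..k}. op_trace (PP i :: 'a L2 \<Rightarrow> _)) = of_nat (CARD('a) choose k)"
    using tr_PP_sum[of k, where 'a='a] sN Suc by simp
  ultimately have "of_nat (CARD('a) choose k) + op_trace (PP (Suc k) :: 'a L2 \<Rightarrow> _) = of_nat (CARD('a) choose Suc k)"
    by simp
  then have "op_trace (PP (Suc k) :: 'a L2 \<Rightarrow> _) = of_nat (CARD('a) choose Suc k) - of_nat (CARD('a) choose k)"
    by (metis add_diff_cancel_left')
  moreover have "binom_int CARD('a) (int s - 1) = CARD('a) choose k" using Suc by (simp add: binom_int_def)
  ultimately show ?thesis using Suc by simp
qed

definition EE :: "nat \<Rightarrow> nat \<Rightarrow> ('a::finite) L2 \<Rightarrow> 'a L2" where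
  "EE r s f = (\<lambda>x. (up^^(r-s)) (PP s ((dn^^(r-s)) f)) x / cc CARD('a) s (r-s))"

definition V0 :: "nat \<Rightarrow> nat \<Rightarrow> ('a::finite) L2 set" where
  "V0 r s = (up^^(r-s)) ` Spe s"

lemma Spe_scale: "f \<in> Spe j \<Longrightarrow> (\<lambda>x. c * f x) \<in> Spe j"
  by (auto simp: Spe_def L2_level_def lin_scale[OF lin_dn])
lemma Spe_div: "f \<in> Spe j \<Longrightarrow> (\<lambda>x. f x / c) \<in> Spe j"
  by (auto simp: Spe_def L2_level_def lin_div[OF lin_dn])
lemma Spe_add: "f \<in> Spe j \<Longrightarrow> g \<in> Spe j \<Longrightarrow> (\<lambda>x. f x + g x) \<in> Spe j"
  by (auto simp: Spe_def L2_level_def lin_add[OF lin_dn])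
lemma Spe_zero: "(\<lambda>x. 0) \<in> Spe j"
  by (auto simp: Spe_def L2_level_def lin_zero[OF lin_dn])
lemma Spe_rho: "bij g \<Longrightarrow> f \<in> Spe j \<Longrightarrow> rho g f \<in> Spe j"
  using eqv_dn unfolding Spe_def L2_level_def eqv_def
  by (auto simp: rho_def card_inv_img)

lemma lin_EE: "lin (EE r s :: ('a::finite) L2 \<Rightarrow> _)"
proof -
  have "lin (\<lambda>f. (up^^(r-s)) (PP s ((dn^^(r-s)) (f::'a L2))))"
    by (intro lin_comp[OF lin_funpow[OF lin_up]] lin_comp[OF lin_PP lin_funpow[OF lin_dn]])
  then show ?thesis unfolding lin_def EE_def by (simp add: add_divide_distrib)
qed

lemma eqv_EE: "eqv (EE r s :: ('a::finite) L2 \<Rightarrow> _)"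
proof -
  have "eqv (\<lambda>f. (up^^(r-s)) (PP s ((dn^^(r-s)) (f::'a L2))))"
    by (intro eqv_comp[OF eqv_funpow[OF eqv_up]] eqv_comp[OF eqv_PP eqv_funpow[OF eqv_dn]])
  then show ?thesis unfolding eqv_def EE_def by (simp add: rho_def)
qed

lemma inner_cnj: "inner_L2 a b = cnj (inner_L2 b a)"
  unfolding inner_L2_def cnj_sum by (simp add: mult.commute)

lemma inner_uppow_r: "inner_L2 g ((up^^m) u) = inner_L2 ((dn^^m) g) (u::('a::finite) L2)"
  by (subst inner_cnj) (simp add: inner_uppow inner_cnj[of u])

context
  fixes r s :: nat
  assumes sr: "s \<le> r" and rsN: "r + s \<le> CARD('a::finite)"
begin

lemma sN: "2 * s \<le> CARD('a)" using sr rsN by simp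

lemma ccnz: "cc CARD('a) s (r-s) \<noteq> 0" using sr rsN by (intro cc_nz) simp

lemma EE_alt: "EE r s f = (up^^(r-s)) (\<lambda>x. PP s ((dn^^(r-s)) (f::'a L2)) x / cc CARD('a) s (r-s))"
  unfolding EE_def by (simp add: lin_div[OF lin_funpow[OF lin_up]])

lemma EE_in: "EE r s (f::'a L2) \<in> V0 r s"
  unfolding EE_alt V0_def by (intro imageI Spe_div PP_Spe[OF sN])

lemma V0_level: "V0 r s \<subseteq> (L2_level r :: 'a L2 set)"
proof
  fix v :: "'a L2" assume "v \<in> V0 r s"
  then obtain p where p: "p \<in> Spe s" "v = (up^^(r-s)) p" by (auto simp: V0_def)
  have "(up^^(r-s)) p \<in> L2_level (s + (r - s))" using p by (intro uppow_level) (simp add: Spe_def)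
  then show "v \<in> L2_level r" using p sr by simp
qed

lemma EE_level: "EE r s (f::'a L2) \<in> L2_level r" using EE_in V0_level by blast

lemma EE_fix: assumes v: "v \<in> V0 r s" shows "EE r s (v::'a L2) = v"
proof -
  obtain p where p: "p \<in> Spe s" "v = (up^^(r-s)) p" using v by (auto simp: V0_def)
  have "(dn^^(r-s)) v = (\<lambda>x. cc CARD('a) s (r-s) * p x)" using p dnup_pow by simp
  moreover have "PP s (\<lambda>x. cc CARD('a) s (r-s) * p x) = (\<lambda>x. cc CARD('a) s (r-s) * p x)"
    by (rule PP_fix[OF Spe_scale[OF p(1)]])
  ultimately show ?thesis unfolding EE_alt using ccnz p by simp
qed

lemma EE_idem: "EE r s (EE r s (f::'a L2)) = EE r s f" using EE_fix EE_in by blast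

lemma EE_lvl: "EE r s (lvl r f) = EE r s (f::'a L2)"
proof -
  have "r = s + (r - s)" using sr by simp
  then have "(dn^^(r-s)) (lvl r f) = lvl s ((dn^^(r-s)) f)" using dnpow_lvl[of "r-s" s f] by simp
  then show ?thesis unfolding EE_def by (simp add: PP_lvl)
qed

lemma EE_perp: assumes v: "v \<in> V0 r s" shows "inner_L2 (\<lambda>x. f x - EE r s f x) (v::'a L2) = 0"
proof -
  obtain p where p: "p \<in> Spe s" "v = (up^^(r-s)) p" using v by (auto simp: V0_def)
  define q where "q = (\<lambda>x. PP s ((dn^^(r-s)) (f::'a L2)) x / cc CARD('a) s (r-s))"
  have qS: "q \<in> Spe s" unfolding q_def by (intro Spe_div PP_Spe[OF sN])
  have "(dn^^(r-s)) (EE r s f) = (\<lambda>x. cc CARD('a) s (r-s) * q x)"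
    unfolding EE_alt q_def[symmetric] using dnup_pow[OF qS] by simp
  also have "\<dots> = PP s ((dn^^(r-s)) f)" unfolding q_def using ccnz by simp
  finally have d: "(dn^^(r-s)) (EE r s f) = PP s ((dn^^(r-s)) f)" .
  have "inner_L2 (\<lambda>x. f x - EE r s f x) v = inner_L2 ((dn^^(r-s)) (\<lambda>x. f x - EE r s f x)) p"
    unfolding p(2) by (rule inner_uppow_r)
  also have "(dn^^(r-s)) (\<lambda>x. f x - EE r s f x) = (\<lambda>x. (dn^^(r-s)) f x - PP s ((dn^^(r-s)) f) x)"
    by (simp add: lin_diff[OF lin_funpow[OF lin_dn]] d)
  also have "inner_L2 \<dots> p = 0" by (rule PP_perp[OF p(1)])
  finally show ?thesis .
qed

lemma tr_EE: "op_trace (EE r s :: 'a L2 \<Rightarrow> _) = op_trace (PP s :: 'a L2 \<Rightarrow> _)"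
proof -
  define m where "m = r - s"
  have "op_trace (EE r s :: 'a L2 \<Rightarrow> _) = op_trace (\<lambda>f. (up^^m) (PP s ((dn^^m) (f::'a L2)))) / cc CARD('a) s m"
    unfolding EE_def tr_def m_def by (simp add: sum_divide_distrib)
  also have "op_trace (\<lambda>f. (up^^m) (PP s ((dn^^m) (f::'a L2)))) = op_trace (\<lambda>f. PP s ((dn^^m) ((up^^m) (f::'a L2))))"
    using tr_cyc[where 'a='a, OF lin_funpow[OF lin_up, of m] lin_comp[OF lin_PP[of s] lin_funpow[OF lin_dn, of m]]] by simp
  also have "\<dots> = op_trace (\<lambda>f. (dn^^m) ((up^^m) (PP s (f::'a L2))))"
    using tr_cyc[where 'a='a, OF lin_PP[of _] lin_comp[OF lin_funpow[OF lin_dn, of m] lin_funpow[OF lin_up, of m]]] by simp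
  also have "\<dots> = op_trace (\<lambda>f x. cc CARD('a) s m * PP s (f::'a L2) x)"
    using dnup_pow[OF PP_Spe[OF sN]] by simp
  also have "\<dots> = cc CARD('a) s m * op_trace (PP s :: 'a L2 \<Rightarrow> _)" by (rule tr_scale)
  finally show ?thesis using ccnz m_def by simp
qed

end



lemma bij_betw_if_combine:
  assumes f: "bij_betw f A A'" and g: "bij_betw g B B'" and d: "A \<inter> B = {}" and d': "A' \<inter> B' = {}"
  shows "bij_betw (\<lambda>x. if x \<in> A then f x else g x) (A \<union> B) (A' \<union> B')"
proof (rule bij_betw_combine[OF _ _ d'])
  have "bij_betw (\<lambda>x. if x \<in> A then f x else g x) A A' = bij_betw f A A'"
    by (rule bij_betw_cong) simp
  then show "bij_betw (\<lambda>x. if x \<in> A then f x else g x) A A'" using f by simp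
  have "bij_betw (\<lambda>x. if x \<in> A then f x else g x) B B' = bij_betw g B B'"
    by (rule bij_betw_cong) (use d in auto)
  then show "bij_betw (\<lambda>x. if x \<in> A then f x else g x) B B'" using g by simp
qed

lemma ext_bij:
  fixes A B A' B' :: "'a::finite set"
  assumes BA: "B \<subseteq> A" and BA': "B' \<subseteq> A'" and cA: "card A = card A'" and cB: "card B = card B'"
  shows "\<exists>f. bij_betw f A A' \<and> f ` B = B'"
proof -
  obtain f1 where f1: "bij_betw f1 B B'" using finite_same_card_bij[OF _ _ cB] by auto
  have cD: "card (A - B) = card (A' - B')" using cA cB BA BA' by (simp add: card_Diff_subset finite_subset)
  obtain f2 where f2: "bij_betw f2 (A - B) (A' - B')" using finite_same_card_bij[of "A - B" "A' - B'"] cD by auto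
  define f where "f = (\<lambda>x. if x \<in> B then f1 x else f2 x)"
  have "bij_betw f (B \<union> (A - B)) (B' \<union> (A' - B'))" unfolding f_def
    by (rule bij_betw_if_combine[OF f1 f2]) auto
  moreover have "B \<union> (A - B) = A" "B' \<union> (A' - B') = A'" using BA BA' by auto
  moreover have "f ` B = B'" using f1 unfolding f_def bij_betw_def by auto
  ultimately show ?thesis by auto
qed

lemma orbit_lemma:
  fixes x0 z z' :: "'a::finite set"
  assumes c: "card z = card z'" and ci: "card (z \<inter> x0) = card (z' \<inter> x0)"
  shows "\<exists>h. bij h \<and> h ` x0 = x0 \<and> h ` z = z'"
proof -
  obtain f1 where f1: "bij_betw f1 x0 x0" "f1 ` (z \<inter> x0) = z' \<inter> x0"
    using ext_bij[of "z \<inter> x0" x0 "z' \<inter> x0" x0] ci by auto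
  have "card (z - x0) = card (z' - x0)" using c ci
    by (simp add: card_Diff_subset_Int)
  then obtain f2 where f2: "bij_betw f2 (-x0) (-x0)" "f2 ` (z - x0) = z' - x0"
    using ext_bij[of "z - x0" "-x0" "z' - x0" "-x0"] by auto
  define h where "h = (\<lambda>x. if x \<in> x0 then f1 x else f2 x)"
  have "bij_betw h (x0 \<union> -x0) (x0 \<union> -x0)" unfolding h_def
    by (rule bij_betw_if_combine[OF f1(1) f2(1)]) auto
  then have hb: "bij h" by simp
  have "h ` x0 = f1 ` x0" unfolding h_def by auto
  also have "\<dots> = x0" using f1(1) by (simp add: bij_betw_def)
  finally have h1: "h ` x0 = x0" .
  have "h ` z = h ` (z \<inter> x0) \<union> h ` (z - x0)" by blast
  also have "h ` (z \<inter> x0) = f1 ` (z \<inter> x0)" unfolding h_def by auto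
  also have "h ` (z - x0) = f2 ` (z - x0)" unfolding h_def by auto
  finally have "h ` z = z'" using f1(2) f2(2) by auto
  then show ?thesis using hb h1 by blast
qed

lemma trans_lemma:
  fixes x y :: "'a::finite set"
  assumes "card x = card y" shows "\<exists>g. bij g \<and> g ` x = y"
  using orbit_lemma[of x y "{}"] assms by auto

lemma swap_lemma:
  fixes x y :: "'a::finite set"
  assumes c: "card x = card y" shows "\<exists>g. bij g \<and> g ` x = y \<and> g ` y = x"
proof -
  obtain g1 where g1: "bij g1" "g1 ` x = y" using trans_lemma[OF c] by blast
  define y' where "y' = g1 ` y"
  have inj: "inj g1" using g1 bij_is_inj by blast
  have cy': "card y' = card x" unfolding y'_def using c card_bij_img[OF g1(1)] by simp
  have "y' \<inter> y = g1 ` (y \<inter> x)" unfolding y'_def using g1(2) image_Int[OF inj] by simp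
  then have ci: "card (y' \<inter> y) = card (x \<inter> y)" using card_bij_img[OF g1(1)] by (simp add: Int_commute)
  obtain h where h: "bij h" "h ` y = y" "h ` y' = x" using orbit_lemma[OF cy' ci] by blast
  have "bij (h \<circ> g1)" using h(1) g1(1) by (rule bij_comp[rotated])
  moreover have "(h \<circ> g1) ` x = y" using g1(2) h(2) by (metis image_comp)
  moreover have "(h \<circ> g1) ` y = x" using h(3) unfolding y'_def by (metis image_comp)
  ultimately show ?thesis by blast
qed

definition Hinv :: "'a set \<Rightarrow> 'a L2 \<Rightarrow> bool" where
  "Hinv x0 \<phi> \<longleftrightarrow> (\<forall>h. bij h \<and> h ` x0 = x0 \<longrightarrow> rho h \<phi> = \<phi>)"

lemma rho_at_img: "bij g \<Longrightarrow> rho g f (g ` x) = f x"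
  by (simp add: rho_def bij_inv_img1)

lemma Hinv_eq:
  assumes H: "Hinv x0 \<phi>" and c: "card z = card z'" and ci: "card (z \<inter> x0) = card (z' \<inter> (x0::'a::finite set))"
  shows "\<phi> z = \<phi> z'"
proof -
  obtain h where h: "bij h" "h ` x0 = x0" "h ` z = z'" using orbit_lemma[OF c ci] by blast
  have "\<phi> z = rho h \<phi> (h ` z)" using rho_at_img[OF h(1)] by simp
  also have "rho h \<phi> = \<phi>" using H h by (simp add: Hinv_def)
  finally show ?thesis using h(3) by simp
qed

definition lev :: "nat \<Rightarrow> (('a::finite) L2 \<Rightarrow> 'a L2) \<Rightarrow> bool" where
  "lev r T \<longleftrightarrow> (\<forall>f. T f \<in> L2_level r) \<and> (\<forall>f. T (lvl r f) = T f)"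

lemma lvl_dl_zero: "card x \<noteq> r \<Longrightarrow> lvl r (dl x) = (\<lambda>y. 0)"
  by (rule ext) (simp add: lvl_def dl_def)

lemma sym_kernel:
  assumes L: "lin T" and Q: "eqv T" and V: "lev r T"
  shows "T (dl y) x = T (dl x) (y::'a::finite set)"
proof (cases "card x = r \<and> card y = r")
  case True
  then obtain g where g: "bij g" "g ` x = y" "g ` y = x" using swap_lemma[of x y] by auto
  have "T (dl y) x = T (rho g (dl x)) x" using rho_dl[OF g(1)] g(2) by simp
  also have "\<dots> = rho g (T (dl x)) x" using Q g(1) by (simp add: eqv_def)
  also have "\<dots> = T (dl x) (inv g ` x)" by (simp add: rho_def)
  also have "inv g ` x = y" using inv_img_iff[OF g(1), of x y] g(3) by simp
  finally show ?thesis .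
next
  case False
  have z: "T (dl w) = (\<lambda>y. 0)" if "card w \<noteq> r" for w
  proof -
    have "T (dl w) = T (lvl r (dl w))" using V by (simp add: lev_def)
    also have "\<dots> = (\<lambda>y. 0)" using lvl_dl_zero[OF that] lin_zero[OF L] by simp
    finally show ?thesis .
  qed
  have lv: "\<And>w u. card u \<noteq> r \<Longrightarrow> T (dl w) u = 0" using V by (auto simp: lev_def L2_level_def)
  show ?thesis
  proof (cases "card x = r")
    case True
    then have "card y \<noteq> r" using False by simp
    then show ?thesis using z[of y] lv[of y x] by simp
  next
    case False
    then show ?thesis using z[of x] lv[of x y] by simp
  qed
qed

lemma lev_comp: "lev r A \<Longrightarrow> lev r B \<Longrightarrow> lev r (\<lambda>f. A (B f))"
  unfolding lev_def by simp

lemma comm_lemma: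
  assumes LA: "lin A" and LB: "lin B" and QA: "eqv A" and QB: "eqv B" and VA: "lev r A" and VB: "lev r B"
  shows "A (B f) = B (A (f::('a::finite) L2))"
proof -
  have LC: "lin (\<lambda>f. A (B f))" by (rule lin_comp[OF LA LB])
  have LD: "lin (\<lambda>f. B (A f))" by (rule lin_comp[OF LB LA])
  have QD: "eqv (\<lambda>f. B (A f))" by (rule eqv_comp[OF QB QA])
  have VD: "lev r (\<lambda>f. B (A f))" by (rule lev_comp[OF VB VA])
  have k: "A (B (dl z)) x = B (A (dl z)) x" for z x
  proof -
    have "A (B (dl z)) x = (\<Sum>y\<in>UNIV. B (dl z) y * A (dl y) x)" by (subst lin_exp[OF LA]) simp
    also have "\<dots> = (\<Sum>y\<in>UNIV. A (dl x) y * B (dl y) z)"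
    proof (rule sum.cong[OF refl])
      fix y
      have "B (dl z) y = B (dl y) z" by (rule sym_kernel[OF LB QB VB])
      moreover have "A (dl y) x = A (dl x) y" by (rule sym_kernel[OF LA QA VA])
      ultimately show "B (dl z) y * A (dl y) x = A (dl x) y * B (dl y) z" by (simp only: mult.commute)
    qed
    also have "\<dots> = B (A (dl x)) z" by (subst lin_exp[OF LB]) simp
    also have "\<dots> = B (A (dl z)) x" by (rule sym_kernel[OF LD QD VD])
    finally show ?thesis .
  qed
  have "A (B f) = (\<lambda>x. \<Sum>z\<in>UNIV. f z * A (B (dl z)) x)" by (rule lin_exp[OF LC])
  also have "\<dots> = (\<lambda>x. \<Sum>z\<in>UNIV. f z * B (A (dl z)) x)" using k by simp
  also have "\<dots> = B (A f)" by (rule lin_exp[OF LD, symmetric])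
  finally show ?thesis .
qed



lemma key_vanish:
  fixes x0 z0 :: "'a::finite set"
  assumes ph: "\<phi> \<in> Spe s" and H: "Hinv x0 \<phi>" and cx0: "card x0 = r" and sr: "s \<le> r"
    and cz0: "card z0 = s" and dz: "z0 \<inter> x0 = {}" and v: "\<phi> z0 = 0"
  shows "\<phi> = (\<lambda>x. 0)"
proof -
  have phl: "\<phi> \<in> L2_level s" and phd: "dn \<phi> = (\<lambda>x. 0)" using ph by (auto simp: Spe_def)
  have step: "\<forall>z. card z = s \<and> card (z \<inter> x0) = i \<longrightarrow> \<phi> z = 0" if "i \<le> s" for i
    using that
  proof (induction i)
    case 0
    show ?case
    proof (intro allI impI)
      fix z assume z: "card z = s \<and> card (z \<inter> x0) = 0"
      have "card (z0 \<inter> x0) = 0" using dz by simp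
      then have "\<phi> z = \<phi> z0" using Hinv_eq[OF H, of z z0] z cz0 by simp
      then show "\<phi> z = 0" using v by simp
    qed
  next
    case (Suc i)
    show ?case
    proof (intro allI impI)
      fix z assume z: "card z = s \<and> card (z \<inter> x0) = Suc i"
      then have "z \<inter> x0 \<noteq> {}" by auto
      then obtain b where b: "b \<in> z" "b \<in> x0" by auto
      define y where "y = z - {b}"
      have cy: "card y + 1 = s" using z b unfolding y_def
        by (simp add: card_Diff_singleton) (metis Suc_pred card_gt_0_iff empty_iff finite)
      have yx: "y \<inter> x0 = (z \<inter> x0) - {b}" unfolding y_def by auto
      have cyx: "card (y \<inter> x0) = i" unfolding yx using z b by (simp add: card_Diff_singleton)
      have "dn \<phi> y = 0" using phd by simp
      then have S0: "(\<Sum>a\<in>-y. \<phi> (insert a y)) = 0" by (simp add: dn_alt)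
      have split: "-y = (x0 - y) \<union> (-(x0 \<union> y))" by auto
      have A1: "\<phi> (insert a y) = \<phi> z" if a: "a \<in> x0 - y" for a
      proof -
        have c1: "card (insert a y) = card z" using a cy z by simp
        have "insert a y \<inter> x0 = insert a (y \<inter> x0)" using a by auto
        then have c2: "card (insert a y \<inter> x0) = card (z \<inter> x0)" using a cyx z by simp
        show ?thesis using Hinv_eq[OF H c1 c2] .
      qed
      have A2: "\<phi> (insert a y) = 0" if a: "a \<in> -(x0 \<union> y)" for a
      proof -
        have c1: "card (insert a y) = s" using a cy by simp
        have "insert a y \<inter> x0 = y \<inter> x0" using a by auto
        then have c2: "card (insert a y \<inter> x0) = i" using cyx by simp
        show ?thesis using Suc.IH Suc.prems c1 c2 by simp
      qed
      have "(\<Sum>a\<in>-y. \<phi> (insert a y)) = (\<Sum>a\<in>x0 - y. \<phi> (insert a y)) + (\<Sum>a\<in>-(x0 \<union> y). \<phi> (insert a y))"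
        unfolding split by (rule sum.union_disjoint) auto
      also have "\<dots> = of_nat (card (x0 - y)) * \<phi> z" using A1 A2 by simp
      finally have "of_nat (card (x0 - y)) * \<phi> z = 0" using S0 by simp
      moreover have "card (x0 - y) \<noteq> 0"
      proof -
        have "card (x0 - y) = card x0 - card (x0 \<inter> y)" by (simp add: card_Diff_subset_Int)
        also have "x0 \<inter> y = y \<inter> x0" by auto
        finally have "card (x0 - y) = r - i" using cx0 cyx by simp
        then show ?thesis using Suc.prems sr by simp
      qed
      ultimately show "\<phi> z = 0" by simp
    qed
  qed
  show ?thesis
  proof
    fix z
    show "\<phi> z = 0"
    proof (cases "card z = s")
      case True
      have "card (z \<inter> x0) \<le> s" using True by (metis card_mono finite Int_lower1)
      then show ?thesis using step True by blast
    next
      case False then show ?thesis using phl by (simp add: L2_level_def)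
    qed
  qed
qed

lemma csub_zero: "csubspace W \<Longrightarrow> (\<lambda>x. 0) \<in> W" by (simp add: csubspace_def)
lemma csub_add: "csubspace W \<Longrightarrow> f \<in> W \<Longrightarrow> g \<in> W \<Longrightarrow> (\<lambda>x. f x + g x) \<in> W" by (simp add: csubspace_def)
lemma csub_scale: "csubspace W \<Longrightarrow> f \<in> W \<Longrightarrow> (\<lambda>x. c * f x) \<in> W" by (simp add: csubspace_def)
lemma csub_sum: assumes W: "csubspace W" and A: "finite A" shows "(\<forall>i\<in>A. g i \<in> W) \<Longrightarrow> (\<lambda>x. \<Sum>i\<in>A. c i * g i x) \<in> W"
  using A
proof (induction A rule: finite_induct)
  case empty then show ?case using csub_zero[OF W] by simp
next
  case (insert a A)
  have "(\<lambda>x. c a * g a x) \<in> W" using insert csub_scale[OF W] by simp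
  moreover have "(\<lambda>x. \<Sum>i\<in>A. c i * g i x) \<in> W" using insert by simp
  ultimately have "(\<lambda>x. (\<lambda>x. c a * g a x) x + (\<lambda>x. \<Sum>i\<in>A. c i * g i x) x) \<in> W" by (rule csub_add[OF W])
  then show ?case using insert by simp
qed
lemma csub_sum1: assumes W: "csubspace W" and A: "finite A" and g: "\<forall>i\<in>A. g i \<in> W"
  shows "(\<lambda>x. \<Sum>i\<in>A. g i x) \<in> W"
  using csub_sum[OF W A g, of "\<lambda>i. 1"] by simp



definition vv :: "nat \<Rightarrow> nat \<Rightarrow> ('a::finite) set \<Rightarrow> 'a L2" where
  "vv r s x0 = EE r s (dl x0)"

definition phi_of :: "nat \<Rightarrow> nat \<Rightarrow> ('a::finite) L2 \<Rightarrow> 'a L2" where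
  "phi_of r s f = (\<lambda>x. PP s ((dn^^(r-s)) f) x / cc CARD('a) s (r-s))"

lemma card_level_set: "card {x::'a::finite set. card x = r} = CARD('a) choose r"
proof -
  have "{x::'a set. card x = r} = {B. B \<subseteq> UNIV \<and> card B = r}" by simp
  also have "card \<dots> = CARD('a) choose r" by (rule n_subsets) simp
  finally show ?thesis .
qed

lemma binom_ne:
  assumes sN: "2 * s \<le> N"
  shows "(of_nat (N choose s) - of_nat (binom_int N (int s - 1)) :: complex) \<noteq> 0"
proof (cases s)
  case 0 then show ?thesis by (simp add: binom_int_def)
next
  case (Suc k)
  have b: "binom_int N (int s - 1) = N choose k" using Suc by (simp add: binom_int_def)
  have e: "Suc (k + (N - Suc k)) = N" using sN Suc by simp
  have key: "Suc k * (N choose Suc k) = Suc (N - Suc k) * (N choose k)"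
    using Suc_times_binomial_add[of k "N - Suc k"] unfolding e .
  have pos: "N choose k > 0" using sN Suc by simp
  have "N choose Suc k \<noteq> N choose k"
  proof
    assume eq: "N choose Suc k = N choose k"
    then have "Suc k * (N choose k) = Suc (N - Suc k) * (N choose k)" using key by simp
    then have "Suc k = Suc (N - Suc k)" using pos by simp
    then show False using sN Suc by simp
  qed
  then show ?thesis unfolding b using Suc by simp
qed

context
  fixes r s :: nat and x0 z0 :: "'a::finite set"
  assumes sr: "s \<le> r" and rsN: "r + s \<le> CARD('a)" and cx0: "card x0 = r"
    and cz0: "card z0 = s" and dz: "z0 \<inter> x0 = {}"
begin

lemma sN2: "2 * s \<le> CARD('a)" using sr rsN by simp

lemma phi_Spe: "phi_of r s (f::'a L2) \<in> Spe s"
  unfolding phi_of_def by (intro Spe_div PP_Spe[OF sN2])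

lemma EE_phi: "EE r s (f::'a L2) = (up^^(r-s)) (phi_of r s f)"
  unfolding phi_of_def using EE_alt[OF sr rsN] by simp

lemma phi_rho: assumes h: "bij h" shows "phi_of r s (rho h (f::'a L2)) = rho h (phi_of r s f)"
proof -
  have a: "(dn^^(r-s)) (rho h f) = rho h ((dn^^(r-s)) f)"
    using eqv_funpow[OF eqv_dn[where 'a='a], of "r-s"] h unfolding eqv_def by blast
  have b: "PP s (rho h g) = rho h (PP s g)" for g :: "'a L2"
    using eqv_PP[of s, where 'a='a] h unfolding eqv_def by blast
  show ?thesis unfolding phi_of_def a b by (simp add: rho_def)
qed

lemma Hinv_phi: assumes "Hinv x0 (f::'a L2)" shows "Hinv x0 (phi_of r s f)"
  unfolding Hinv_def
proof (intro allI impI)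
  fix h :: "'a \<Rightarrow> 'a" assume h: "bij h \<and> h ` x0 = x0"
  then have "rho h f = f" using assms by (simp add: Hinv_def)
  then show "rho h (phi_of r s f) = phi_of r s f" using phi_rho[of h f] h by simp
qed

lemma Hinv_v0: "Hinv x0 (vv r s x0)"
  unfolding Hinv_def vv_def
proof (intro allI impI)
  fix h :: "'a \<Rightarrow> 'a" assume h: "bij h \<and> h ` x0 = x0"
  have "EE r s (rho h (dl x0)) = rho h (EE r s (dl x0))" using eqv_EE[of r s, where 'a='a] h unfolding eqv_def by blast
  then have "rho h (EE r s (dl x0)) = EE r s (rho h (dl x0))" by simp
  also have "\<dots> = EE r s (dl x0)" using rho_dl[of h x0] h by simp
  finally show "rho h (EE r s (dl x0)) = EE r s (dl x0)" .
qed

lemma v0_V0: "vv r s x0 \<in> V0 r s"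
  unfolding vv_def by (rule EE_in[OF sr rsN])

lemma EE_dl_lev: "card (y::'a set) = r \<Longrightarrow> \<exists>g. bij g \<and> g ` x0 = y \<and> EE r s (dl y) = rho g (vv r s x0)"
proof -
  assume "card y = r"
  then obtain g where g: "bij g" "g ` x0 = y" using trans_lemma[of x0 y] cx0 by auto
  have "EE r s (dl y) = EE r s (rho g (dl x0))" using rho_dl[OF g(1)] g(2) by simp
  also have "\<dots> = rho g (vv r s x0)" using eqv_EE[of r s, where 'a='a] g(1) unfolding eqv_def vv_def by blast
  finally show ?thesis using g by blast
qed

lemma EE_dl_off: "card (y::'a set) \<noteq> r \<Longrightarrow> EE r s (dl y) = (\<lambda>x. 0)"
proof -
  assume "card y \<noteq> r"
  then have z: "lvl r (dl y) = (\<lambda>x. 0)" by (rule lvl_dl_zero)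
  have "EE r s (dl y) = EE r s (lvl r (dl y))" using EE_lvl[OF sr rsN, of "dl y"] by simp
  also have "\<dots> = (\<lambda>x. 0)" unfolding z by (rule lin_zero[OF lin_EE])
  finally show ?thesis .
qed

lemma tr_v0: "op_trace (EE r s :: 'a L2 \<Rightarrow> _) = of_nat (CARD('a) choose r) * vv r s x0 x0"
proof -
  have "op_trace (EE r s :: 'a L2 \<Rightarrow> _) = (\<Sum>x\<in>(UNIV::'a set set). if card x = r then vv r s x0 x0 else 0)"
    unfolding tr_def
  proof (rule sum.cong[OF refl])
    fix x :: "'a set"
    show "EE r s (dl x) x = (if card x = r then vv r s x0 x0 else 0)"
    proof (cases "card x = r")
      case True
      then obtain g where g: "bij g" "g ` x0 = x" "EE r s (dl x) = rho g (vv r s x0)" using EE_dl_lev by blast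
      have "EE r s (dl x) x = rho g (vv r s x0) (g ` x0)" using g by simp
      also have "\<dots> = vv r s x0 x0" by (rule rho_at_img[OF g(1)])
      finally show ?thesis using True by simp
    next
      case False
      then show ?thesis using EE_level[OF sr rsN, of "dl x"] by (simp add: L2_level_def)
    qed
  qed
  also have "\<dots> = of_nat (card {x::'a set. card x = r}) * vv r s x0 x0"
    by (simp add: sum.If_cases)
  finally show ?thesis by (simp add: card_level_set)
qed

lemma v0x0: "vv r s x0 x0 \<noteq> 0"
proof
  assume "vv r s x0 x0 = 0"
  then have "op_trace (EE r s :: 'a L2 \<Rightarrow> _) = 0" using tr_v0 by simp
  then have "op_trace (PP s :: 'a L2 \<Rightarrow> _) = 0" using tr_EE[OF sr rsN] by simp
  then show False using tr_PP[OF sN2] binom_ne[OF sN2] by simp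
qed

lemma v0_nz: "vv r s x0 \<noteq> (\<lambda>x. 0)" using v0x0 by auto

lemma key2:
  assumes f: "f \<in> V0 r s" and Hf: "Hinv x0 f"
  shows "\<exists>c. f = (\<lambda>x. c * vv r s x0 x)"
proof -
  define p1 where "p1 = phi_of r s f"
  define p2 where "p2 = phi_of r s (vv r s x0)"
  have S1: "p1 \<in> Spe s" and S2: "p2 \<in> Spe s" unfolding p1_def p2_def by (rule phi_Spe)+
  have H1: "Hinv x0 p1" unfolding p1_def by (rule Hinv_phi[OF Hf])
  have H2: "Hinv x0 p2" unfolding p2_def by (rule Hinv_phi[OF Hinv_v0])
  have f1: "f = (up^^(r-s)) p1" unfolding p1_def using EE_phi[of f] EE_fix[OF sr rsN f] by simp
  have f2: "vv r s x0 = (up^^(r-s)) p2" unfolding p2_def using EE_phi[of "vv r s x0"] EE_fix[OF sr rsN v0_V0] by simp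
  have p2z: "p2 z0 \<noteq> 0"
  proof
    assume "p2 z0 = 0"
    then have "p2 = (\<lambda>x. 0)" using key_vanish[OF S2 H2 cx0 sr cz0 dz] by simp
    then have "vv r s x0 = (\<lambda>x. 0)" using f2 lin_zero[OF lin_funpow[OF lin_up]] by simp
    then show False using v0_nz by simp
  qed
  define \<psi> where "\<psi> = (\<lambda>x. p1 z0 * p2 x + (- p2 z0) * p1 x)"
  have Sp: "\<psi> \<in> Spe s" unfolding \<psi>_def by (intro Spe_add Spe_scale S1 S2)
  have Hp: "Hinv x0 \<psi>" unfolding Hinv_def
  proof (intro allI impI)
    fix h :: "'a \<Rightarrow> 'a" assume h: "bij h \<and> h ` x0 = x0"
    then have e1: "rho h p1 = p1" and e2: "rho h p2 = p2" using H1 H2 by (auto simp: Hinv_def)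
    have "rho h \<psi> = (\<lambda>x. p1 z0 * rho h p2 x + (- p2 z0) * rho h p1 x)" unfolding \<psi>_def by (simp add: rho_def)
    then show "rho h \<psi> = \<psi>" unfolding e1 e2 \<psi>_def .
  qed
  have "\<psi> z0 = 0" unfolding \<psi>_def by simp
  then have "\<psi> = (\<lambda>x. 0)" using key_vanish[OF Sp Hp cx0 sr cz0 dz] by simp
  then have pe: "p1 z0 * p2 x = p2 z0 * p1 x" for x
    using fun_cong[OF \<open>\<psi> = (\<lambda>x. 0)\<close>, of x] unfolding \<psi>_def by (simp add: algebra_simps)
  have "p1 = (\<lambda>x. (p1 z0 / p2 z0) * p2 x)"
  proof
    fix x show "p1 x = p1 z0 / p2 z0 * p2 x" using pe[of x] p2z by (simp add: field_simps)
  qed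
  then have "f = (up^^(r-s)) (\<lambda>x. (p1 z0 / p2 z0) * p2 x)" using f1 by simp
  also have "\<dots> = (\<lambda>x. (p1 z0 / p2 z0) * (up^^(r-s)) p2 x)" by (rule lin_scale[OF lin_funpow[OF lin_up]])
  finally show ?thesis unfolding f2[symmetric] by blast
qed

end



lemma V0_csub: "csubspace (V0 r s :: ('a::finite) L2 set)"
  unfolding csubspace_def
proof (intro conjI ballI allI)
  have z: "(up^^(r-s)) (\<lambda>x. 0) = (\<lambda>x::'a set. 0)" by (rule lin_zero[OF lin_funpow[OF lin_up]])
  show "(\<lambda>x. 0) \<in> (V0 r s :: 'a L2 set)" unfolding V0_def using imageI[OF Spe_zero[where 'a='a and j=s], of "up^^(r-s)"] z by simp
next
  fix f h :: "'a L2" assume "f \<in> V0 r s" "h \<in> V0 r s"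
  then obtain p q where p: "p \<in> Spe s" "f = (up^^(r-s)) p" and q: "q \<in> Spe s" "h = (up^^(r-s)) q"
    by (auto simp: V0_def)
  have "(up^^(r-s)) (\<lambda>x. p x + q x) = (\<lambda>x. f x + h x)" using p q lin_add[OF lin_funpow[OF lin_up]] by simp
  then show "(\<lambda>x. f x + h x) \<in> V0 r s" unfolding V0_def by (intro image_eqI[OF _ Spe_add[OF p(1) q(1)]]) simp
next
  fix c and f :: "'a L2" assume "f \<in> V0 r s"
  then obtain p where p: "p \<in> Spe s" "f = (up^^(r-s)) p" by (auto simp: V0_def)
  have "(up^^(r-s)) (\<lambda>x. c * p x) = (\<lambda>x. c * f x)" using p lin_scale[OF lin_funpow[OF lin_up]] by simp
  then show "(\<lambda>x. c * f x) \<in> V0 r s" unfolding V0_def by (intro image_eqI[OF _ Spe_scale[OF p(1), of c]]) simp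
qed

lemma V0_Ginv: "G_invariant (V0 r s :: ('a::finite) L2 set)"
  unfolding G_invariant_def
proof (intro allI impI ballI)
  fix g :: "'a \<Rightarrow> 'a" and f :: "'a L2" assume g: "bij g" and f: "f \<in> V0 r s"
  then obtain p where p: "p \<in> Spe s" "f = (up^^(r-s)) p" by (auto simp: V0_def)
  have "rho g f = (up^^(r-s)) (rho g p)"
    using eqv_funpow[OF eqv_up[where 'a='a], of "r-s"] g p(2) unfolding eqv_def by simp
  then show "rho g f \<in> V0 r s" unfolding V0_def by (intro image_eqI[OF _ Spe_rho[OF g p(1)]])
qed

lemma Specht_eq: "Specht_two_row s = (Spe s :: ('a::finite) L2 set)"
proof -
  have dn_eq: "dn \<psi> y = (if card y + 1 = s then (\<Sum>x\<in>{x. card x = s \<and> y \<subseteq> x}. \<psi> x) else 0)"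
    if l: "\<psi> \<in> L2_level s" for \<psi> :: "'a L2" and y
  proof -
    have "dn \<psi> y = (\<Sum>x\<in>{x. y \<subseteq> x \<and> card x = card y + 1}. \<psi> x)" by (simp add: dn_def sum_UNIV_if)
    also have "\<dots> = (if card y + 1 = s then (\<Sum>x\<in>{x. card x = s \<and> y \<subseteq> x}. \<psi> x) else 0)"
    proof (cases "card y + 1 = s")
      case True
      then have "{x. y \<subseteq> x \<and> card x = card y + 1} = {x. card x = s \<and> y \<subseteq> x}" by auto
      then show ?thesis using True by simp
    next
      case False
      then show ?thesis using l by (auto simp: L2_level_def intro!: sum.neutral)
    qed
    finally show ?thesis .
  qed
  show ?thesis
  proof (intro equalityI subsetI)
    fix \<psi> :: "'a L2" assume a: "\<psi> \<in> Specht_two_row s"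
    then have l: "\<psi> \<in> L2_level s" by (simp add: Specht_two_row_def)
    have "dn \<psi> = (\<lambda>x. 0)"
    proof
      fix y show "dn \<psi> y = 0"
      proof (cases "card y + 1 = s")
        case True
        then have "s \<ge> 1" "card y = s - 1" by auto
        then show ?thesis using a True dn_eq[OF l, of y] by (simp add: Specht_two_row_def)
      next
        case False then show ?thesis using dn_eq[OF l, of y] by simp
      qed
    qed
    then show "\<psi> \<in> Spe s" using l by (simp add: Spe_def)
  next
    fix \<psi> :: "'a L2" assume a: "\<psi> \<in> Spe s"
    then have l: "\<psi> \<in> L2_level s" and d: "dn \<psi> = (\<lambda>x. 0)" by (auto simp: Spe_def)
    have "\<forall>y::'a set. card y = s - 1 \<longrightarrow> (\<Sum>x\<in>{x. card x = s \<and> y \<subseteq> x}. \<psi> x) = 0" if "s \<ge> 1"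
    proof (intro allI impI)
      fix y :: "'a set" assume "card y = s - 1"
      then have "card y + 1 = s" using that by simp
      then show "(\<Sum>x\<in>{x. card x = s \<and> y \<subseteq> x}. \<psi> x) = 0" using dn_eq[OF l, of y] d by simp
    qed
    then show "\<psi> \<in> Specht_two_row s" using l by (simp add: Specht_two_row_def)
  qed
qed

context
  fixes r s :: nat and x0 z0 :: "'a::finite set"
  assumes sr: "s \<le> r" and rsN: "r + s \<le> CARD('a)" and cx0: "card x0 = r"
    and cz0: "card z0 = s" and dz: "z0 \<inter> x0 = {}"
begin

lemmas v0_nz' = v0_nz[OF sr rsN cx0 cz0 dz]
lemmas v0x0' = v0x0[OF sr rsN cx0 cz0 dz]
lemmas key2' = key2[OF sr rsN cx0 cz0 dz]
lemmas Hinv_v0' = Hinv_v0[OF sr rsN cx0 cz0 dz]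
lemmas v0_V0' = v0_V0[OF sr rsN cx0 cz0 dz]
lemmas EE_dl_lev' = EE_dl_lev[OF sr rsN cx0 cz0 dz]
lemmas EE_dl_off' = EE_dl_off[OF sr rsN cx0 cz0 dz]

lemma V0_span:
  assumes W: "G_subspace W" and v0W: "vv r s x0 \<in> W" and v: "v \<in> V0 r s"
  shows "v \<in> W"
proof -
  have Wc: "csubspace W" and Wi: "G_invariant W" using W by (auto simp: G_subspace_def)
  have "v = EE r s v" using EE_fix[OF sr rsN v] by simp
  also have "\<dots> = (\<lambda>x. \<Sum>y\<in>UNIV. v y * EE r s (dl y) x)" by (rule lin_exp[OF lin_EE])
  finally have ve: "v = (\<lambda>x. \<Sum>y\<in>UNIV. v y * EE r s (dl y) x)" .
  have allW: "\<forall>y\<in>UNIV. EE r s (dl y) \<in> W"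
  proof
    fix y :: "'a set"
    show "EE r s (dl y) \<in> W"
    proof (cases "card y = r")
      case True
      then obtain g where g: "bij g" "EE r s (dl y) = rho g (vv r s x0)" using EE_dl_lev' by blast
      then show ?thesis using Wi v0W by (simp add: G_invariant_def)
    next
      case False then show ?thesis using EE_dl_off' csub_zero[OF Wc] by simp
    qed
  qed
  have fin: "finite (UNIV :: 'a set set)" by simp
  have "(\<lambda>x. \<Sum>y\<in>UNIV. v y * EE r s (dl y) x) \<in> W" using csub_sum[OF Wc fin allW, where c=v] by simp
  then show ?thesis using ve by simp
qed

definition HH :: "('a \<Rightarrow> 'a) set" where "HH = {h. bij h \<and> h ` x0 = x0}"

lemma HH_fin: "finite HH" by simp

lemma HH_reindex:
  assumes h': "h' \<in> HH"
  shows "(\<Sum>h\<in>HH. F (h' \<circ> h)) = (\<Sum>h\<in>HH. (F h :: complex))"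
proof -
  have b: "bij h'" and i: "h' ` x0 = x0" using h' by (auto simp: HH_def)
  have ib: "bij (inv h')" using b by (simp add: bij_imp_bij_inv)
  have ii: "inv h' ` x0 = x0" using inv_img_iff[OF b, of x0 x0] i by simp
  show ?thesis
  proof (rule sum.reindex_bij_witness[where i="\<lambda>h. inv h' \<circ> h" and j="\<lambda>h. h' \<circ> h"])
    fix a assume "a \<in> HH"
    have "inv h' \<circ> h' = id" using b by (simp add: bij_is_inj)
    then show "inv h' \<circ> (h' \<circ> a) = a" by (simp add: comp_assoc[symmetric])
    have "(h' \<circ> a) ` x0 = h' ` (a ` x0)" by (rule image_comp[symmetric])
    then show "h' \<circ> a \<in> HH" using \<open>a \<in> HH\<close> b i bij_comp[of a h'] by (simp add: HH_def)
    show "F (h' \<circ> a) = F (h' \<circ> a)" ..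
  next
    fix a assume "a \<in> HH"
    have "h' \<circ> inv h' = id" using b by (simp add: bij_is_surj surj_iff[symmetric])
    then show "h' \<circ> (inv h' \<circ> a) = a" by (simp add: comp_assoc[symmetric])
    have "(inv h' \<circ> a) ` x0 = inv h' ` (a ` x0)" by (rule image_comp[symmetric])
    then show "inv h' \<circ> a \<in> HH" using \<open>a \<in> HH\<close> ib ii bij_comp[of a "inv h'"] by (simp add: HH_def)
  qed
qed

lemma V0_irred: "G_irreducible (V0 r s :: 'a L2 set)"
  unfolding G_irreducible_def
proof (intro conjI allI impI)
  show GS: "G_subspace (V0 r s :: 'a L2 set)" by (simp add: G_subspace_def V0_csub V0_Ginv)
  show "(V0 r s :: 'a L2 set) \<noteq> {\<lambda>x. 0}" using v0_V0' v0_nz' by auto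
  fix W :: "'a L2 set" assume a: "G_subspace W \<and> W \<subseteq> V0 r s"
  then have Wc: "csubspace W" and Wi: "G_invariant W" and WV: "W \<subseteq> V0 r s" by (auto simp: G_subspace_def)
  show "W = {\<lambda>x. 0} \<or> W = V0 r s"
  proof (cases "W = {\<lambda>x. 0}")
    case True then show ?thesis by simp
  next
    case False
    then obtain w where w: "w \<in> W" "w \<noteq> (\<lambda>x. 0)" using csub_zero[OF Wc] by blast
    then obtain x where wx: "w x \<noteq> 0" by auto
    have "w \<in> L2_level r" using w(1) WV V0_level[OF sr rsN] by blast
    then have cx: "card x = r" using wx by (auto simp: L2_level_def)
    obtain g where g: "bij g" "g ` x0 = x" using trans_lemma[of x0 x] cx cx0 by auto
    have ig: "bij (inv g)" using g(1) by (simp add: bij_imp_bij_inv)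
    define w1 where "w1 = rho (inv g) w"
    have w1W: "w1 \<in> W" unfolding w1_def using Wi ig w(1) by (simp add: G_invariant_def)
    have "w1 x0 = w (inv (inv g) ` x0)" by (simp add: w1_def rho_def)
    also have "inv (inv g) = g" using g(1) by (rule inv_inv_eq)
    finally have w1x0: "w1 x0 \<noteq> 0" using g(2) wx by simp
    define w' where "w' = (\<lambda>y. \<Sum>h\<in>HH. rho h w1 y)"
    have w'W: "w' \<in> W" unfolding w'_def
      by (rule csub_sum1[OF Wc HH_fin]) (use Wi w1W in \<open>auto simp: HH_def G_invariant_def\<close>)
    have Hw': "Hinv x0 w'" unfolding Hinv_def
    proof (intro allI impI)
      fix h' :: "'a \<Rightarrow> 'a" assume h': "bij h' \<and> h' ` x0 = x0"
      then have h'H: "h' \<in> HH" by (simp add: HH_def)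
      show "rho h' w' = w'"
      proof
        fix y
        have "rho h' w' y = (\<Sum>h\<in>HH. rho h' (rho h w1) y)" by (simp add: w'_def rho_def)
        also have "\<dots> = (\<Sum>h\<in>HH. rho (h' \<circ> h) w1 y)"
          by (rule sum.cong[OF refl]) (use h' in \<open>simp add: rho_comp HH_def\<close>)
        also have "\<dots> = (\<Sum>h\<in>HH. rho h w1 y)" by (rule HH_reindex[OF h'H, of "\<lambda>h. rho h w1 y"])
        finally show "rho h' w' y = w' y" by (simp add: w'_def)
      qed
    qed
    have "w' x0 = (\<Sum>h\<in>HH. w1 x0)"
      unfolding w'_def
    proof (rule sum.cong[OF refl])
      fix h assume "h \<in> HH"
      then have "bij h" "h ` x0 = x0" by (auto simp: HH_def)
      then have "inv h ` x0 = x0" using inv_img_iff by metis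
      then show "rho h w1 x0 = w1 x0" by (simp add: rho_def)
    qed
    moreover have "id \<in> HH" by (simp add: HH_def)
    then have "card HH \<noteq> 0" using HH_fin by auto
    ultimately have w'x0: "w' x0 \<noteq> 0" using w1x0 by simp
    obtain c where c: "w' = (\<lambda>y. c * vv r s x0 y)" using key2'[OF _ Hw'] w'W WV by blast
    then have "c \<noteq> 0" using w'x0 by auto
    then have e: "vv r s x0 = (\<lambda>y. (1/c) * w' y)" using c by auto
    have "(\<lambda>y. (1/c) * w' y) \<in> W" by (rule csub_scale[OF Wc w'W])
    then have v0W: "vv r s x0 \<in> W" unfolding e .
    have "V0 r s \<subseteq> W" using V0_span[OF _ v0W] a by blast
    then show ?thesis using WV by blast
  qed
qed

end



definition TT :: "nat \<Rightarrow> nat \<Rightarrow> ('a::finite) L2 \<Rightarrow> 'a L2" where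
  "TT r s f = (\<lambda>x. (dn^^(r-s)) f x / cc CARD('a) s (r-s))"

context
  fixes r s :: nat and x0 z0 :: "'a::finite set"
  assumes sr: "s \<le> r" and rsN: "r + s \<le> CARD('a)" and cx0: "card x0 = r"
    and cz0: "card z0 = s" and dz: "z0 \<inter> x0 = {}"
begin

lemmas V0_irred' = V0_irred[OF sr rsN cx0 cz0 dz]

lemma TT_up: "p \<in> Spe s \<Longrightarrow> TT r s ((up^^(r-s)) p) = (p :: 'a L2)"
  unfolding TT_def using dnup_pow[of p s "r-s"] ccnz[OF sr rsN] by simp

lemma up_bij: "bij_betw (up^^(r-s)) (Spe s) (V0 r s :: 'a L2 set)"
proof -
  have "inj_on (up^^(r-s)) (Spe s :: 'a L2 set)"
    by (rule inj_on_inverseI[where g="TT r s"]) (rule TT_up)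
  then show ?thesis by (simp add: bij_betw_def V0_def)
qed

lemma V0_iso: "G_isomorphic (V0 r s :: 'a L2 set) (Specht_two_row s)"
  unfolding G_isomorphic_def Specht_eq
proof (intro exI[of _ "TT r s"] conjI allI impI ballI)
  show "clinear_on (V0 r s) (TT r s :: 'a L2 \<Rightarrow> _)"
    unfolding clinear_on_def TT_def
    by (simp add: lin_add[OF lin_funpow[OF lin_dn]] lin_scale[OF lin_funpow[OF lin_dn]] add_divide_distrib)
  show "bij_betw (TT r s) (V0 r s) (Spe s :: 'a L2 set)"
  proof (rule bij_betw_byWitness[where f'="up^^(r-s)"])
    show "\<forall>a\<in>V0 r s. (up^^(r-s)) (TT r s a) = (a :: 'a L2)"
      using TT_up by (auto simp: V0_def)
    show "\<forall>a'\<in>Spe s. TT r s ((up^^(r-s)) a') = (a' :: 'a L2)" using TT_up by blast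
    show "TT r s ` V0 r s \<subseteq> (Spe s :: 'a L2 set)" using TT_up by (auto simp: V0_def)
    show "(up^^(r-s)) ` Spe s \<subseteq> (V0 r s :: 'a L2 set)" by (simp add: V0_def)
  qed
  fix g :: "'a \<Rightarrow> 'a" and f :: "'a L2" assume g: "bij g"
  show "TT r s (rho g f) = rho g (TT r s f)"
    using eqv_funpow[OF eqv_dn[where 'a='a], of "r-s"] g unfolding eqv_def TT_def
    by (simp add: rho_def)
qed

lemma V0_unique:
  assumes Vl: "V \<subseteq> L2_level r" and Vi: "G_irreducible V" and Vs: "G_isomorphic V (Specht_two_row s)"
  shows "V = (V0 r s :: 'a L2 set)"
proof -
  have GV: "G_subspace V" and Vnz: "V \<noteq> {\<lambda>x. 0}" using Vi by (auto simp: G_irreducible_def)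
  have Vc: "csubspace V" and VG: "G_invariant V" using GV by (auto simp: G_subspace_def)
  obtain T where Tl: "clinear_on V T" and Tb: "bij_betw T V (Spe s)"
    and Te: "\<forall>g. bij g \<longrightarrow> (\<forall>f\<in>V. T (rho g f) = rho g (T f))"
    using Vs unfolding G_isomorphic_def Specht_eq by blast
  define P where "P = (\<lambda>v. (up^^(r-s)) (T v))"
  have Pb: "bij_betw P V (V0 r s)" unfolding P_def
    using bij_betw_trans[OF Tb up_bij] by (simp add: comp_def)
  define Q where "Q = inv_into V P"
  have PQ: "P (Q a) = a" if "a \<in> V0 r s" for a
    unfolding Q_def using that Pb by (simp add: bij_betw_def f_inv_into_f)
  have QP: "Q (P v) = v" if "v \<in> V" for v
    unfolding Q_def using that Pb by (simp add: bij_betw_def inv_into_f_f)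
  have QV: "Q a \<in> V" if "a \<in> V0 r s" for a
    unfolding Q_def using that Pb bij_betw_inv_into bij_betw_apply by metis
  have Plin: "P (\<lambda>x. c * f x + h x) = (\<lambda>x. c * P f x + P h x)" if "f \<in> V" "h \<in> V" for c f h
  proof -
    have "P (\<lambda>x. c * f x + h x) = (up^^(r-s)) (\<lambda>x. c * T f x + T h x)"
      using Tl that unfolding clinear_on_def P_def by simp
    also have "\<dots> = (\<lambda>x. c * P f x + P h x)" unfolding P_def
      by (simp add: lin_add[OF lin_funpow[OF lin_up]] lin_scale[OF lin_funpow[OF lin_up]])
    finally show ?thesis .
  qed
  have Qlin: "Q (\<lambda>x. c * a x + b x) = (\<lambda>x. c * Q a x + Q b x)" if "a \<in> V0 r s" "b \<in> V0 r s" for c a b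
  proof -
    have RV: "(\<lambda>x. c * Q a x + Q b x) \<in> V"
      using csub_add[OF Vc csub_scale[OF Vc QV[OF that(1)]] QV[OF that(2)]] by simp
    have "P (\<lambda>x. c * Q a x + Q b x) = (\<lambda>x. c * a x + b x)"
      using Plin[OF QV[OF that(1)] QV[OF that(2)]] PQ that by simp
    then have "Q (\<lambda>x. c * a x + b x) = Q (P (\<lambda>x. c * Q a x + Q b x))" by simp
    also have "\<dots> = (\<lambda>x. c * Q a x + Q b x)" by (rule QP[OF RV])
    finally show ?thesis .
  qed
  have z0V: "(\<lambda>x. 0) \<in> (V0 r s :: 'a L2 set)" by (rule csub_zero[OF V0_csub])
  have Q0: "Q (\<lambda>x. 0) = (\<lambda>x. 0)"
    using Qlin[OF z0V z0V, of "-1"] by simp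
  have Qeq: "Q (rho g a) = rho g (Q a)" if "a \<in> V0 r s" "bij g" for a g
  proof -
    have RV: "rho g (Q a) \<in> V" using VG that QV by (simp add: G_invariant_def)
    have "P (rho g (Q a)) = (up^^(r-s)) (rho g (T (Q a)))"
      using Te that QV unfolding P_def by simp
    also have "\<dots> = rho g (P (Q a))"
      using eqv_funpow[OF eqv_up[where 'a='a], of "r-s"] that(2) unfolding eqv_def P_def by simp
    also have "\<dots> = rho g a" using PQ that by simp
    finally have "Q (rho g a) = Q (P (rho g (Q a)))" by simp
    also have "\<dots> = rho g (Q a)" by (rule QP[OF RV])
    finally show ?thesis .
  qed
  define \<Theta> where "\<Theta> = (\<lambda>f x. Q (EE r s f) x - EE r s (Q (EE r s f)) x)"
  have EV: "EE r s f \<in> V0 r s" for f :: "'a L2" by (rule EE_in[OF sr rsN])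
  have QEadd: "Q (EE r s (\<lambda>x. f x + g x)) = (\<lambda>x. Q (EE r s f) x + Q (EE r s g) x)" for f g :: "'a L2"
  proof -
    have "EE r s (\<lambda>x. f x + g x) = (\<lambda>x. EE r s f x + EE r s g x)" by (rule lin_add[OF lin_EE])
    then show ?thesis using Qlin[OF EV EV, of 1 f g] by simp
  qed
  have QEscale: "Q (EE r s (\<lambda>x. c * f x)) = (\<lambda>x. c * Q (EE r s f) x)" for c and f :: "'a L2"
  proof -
    have "EE r s (\<lambda>x. c * f x) = (\<lambda>x. c * EE r s f x)" by (rule lin_scale[OF lin_EE])
    then show ?thesis using Qlin[OF EV z0V, of c f] Q0 by simp
  qed
  have LT: "lin \<Theta>" unfolding lin_def
  proof (intro conjI allI)
    fix f g :: "'a L2"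
    have a1: "EE r s (\<lambda>x. Q (EE r s f) x + Q (EE r s g) x) = (\<lambda>x. EE r s (Q (EE r s f)) x + EE r s (Q (EE r s g)) x)"
      by (rule lin_add[OF lin_EE])
    show "\<Theta> (\<lambda>x. f x + g x) = (\<lambda>x. \<Theta> f x + \<Theta> g x)"
      unfolding \<Theta>_def QEadd a1 by (simp add: algebra_simps)
  next
    fix c and f :: "'a L2"
    have a1: "EE r s (\<lambda>x. c * Q (EE r s f) x) = (\<lambda>x. c * EE r s (Q (EE r s f)) x)"
      by (rule lin_scale[OF lin_EE])
    show "\<Theta> (\<lambda>x. c * f x) = (\<lambda>x. c * \<Theta> f x)"
      unfolding \<Theta>_def QEscale a1 by (simp add: algebra_simps)
  qed
  have QT: "eqv \<Theta>" unfolding eqv_def \<Theta>_def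
  proof (intro allI impI ext)
    fix g :: "'a \<Rightarrow> 'a" and f x assume g: "bij g"
    have e1: "EE r s (rho g f) = rho g (EE r s f)" using eqv_EE g unfolding eqv_def by blast
    have e2: "Q (rho g (EE r s f)) = rho g (Q (EE r s f))" by (rule Qeq[OF EV g])
    have e3: "EE r s (rho g (Q (EE r s f))) = rho g (EE r s (Q (EE r s f)))" using eqv_EE g unfolding eqv_def by blast
    show "Q (EE r s (rho g f)) x - EE r s (Q (EE r s (rho g f))) x =
          rho g (\<lambda>x. Q (EE r s f) x - EE r s (Q (EE r s f)) x) x"
      unfolding e1 e2 e3 by (simp add: rho_def)
  qed
  have VT: "lev r \<Theta>" unfolding lev_def \<Theta>_def
  proof (intro conjI allI)
    fix f :: "'a L2"
    have "Q (EE r s f) \<in> L2_level r" using QV[OF EV] Vl by blast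
    moreover have "EE r s (Q (EE r s f)) \<in> L2_level r" by (rule EE_level[OF sr rsN])
    ultimately show "(\<lambda>x. Q (EE r s f) x - EE r s (Q (EE r s f)) x) \<in> L2_level r"
      by (simp add: L2_level_def)
    show "(\<lambda>x. Q (EE r s (lvl r f)) x - EE r s (Q (EE r s (lvl r f))) x) = (\<lambda>x. Q (EE r s f) x - EE r s (Q (EE r s f)) x)"
      by (simp add: EE_lvl[OF sr rsN])
  qed
  have VE: "lev r (EE r s :: 'a L2 \<Rightarrow> _)" unfolding lev_def
    using EE_level[OF sr rsN] EE_lvl[OF sr rsN] by blast
  have T0: "\<Theta> f = (\<lambda>x. 0)" for f
  proof -
    have "\<Theta> (EE r s f) = EE r s (\<Theta> f)" by (rule comm_lemma[OF LT lin_EE QT eqv_EE VT VE])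
    also have "\<dots> = (\<lambda>x. EE r s (Q (EE r s f)) x - EE r s (EE r s (Q (EE r s f))) x)"
      unfolding \<Theta>_def by (rule lin_diff[OF lin_EE])
    also have "\<dots> = (\<lambda>x. 0)" by (simp add: EE_idem[OF sr rsN])
    finally have "\<Theta> (EE r s f) = (\<lambda>x. 0)" .
    moreover have "\<Theta> (EE r s f) = \<Theta> f" unfolding \<Theta>_def by (simp add: EE_idem[OF sr rsN])
    ultimately show ?thesis by simp
  qed
  have VV0: "V \<subseteq> V0 r s"
  proof
    fix v assume v: "v \<in> V"
    define a where "a = P v"
    have aV: "a \<in> V0 r s" unfolding a_def by (rule bij_betw_apply[OF Pb v])
    have Ea: "EE r s a = a" by (rule EE_fix[OF sr rsN aV])
    have Qa: "Q a = v" unfolding a_def by (rule QP[OF v])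
    have "\<Theta> a = (\<lambda>x. v x - EE r s v x)" unfolding \<Theta>_def Ea Qa ..
    then have "v = EE r s v" using T0[of a] by (metis (no_types) eq_iff_diff_eq_0 ext)
    then show "v \<in> V0 r s" using EE_in[OF sr rsN, of v] by simp
  qed
  have "V = {\<lambda>x. 0} \<or> V = V0 r s" using V0_irred' GV VV0 unfolding G_irreducible_def by blast
  then show ?thesis using Vnz by blast
qed

lemma L2_rs_eq: "L2_rs r s = (V0 r s :: 'a L2 set)"
  unfolding L2_rs_def
proof (rule the_equality)
  show "(V0 r s :: 'a L2 set) \<subseteq> L2_level r \<and> G_irreducible (V0 r s :: 'a L2 set) \<and> G_isomorphic (V0 r s :: 'a L2 set) (Specht_two_row s)"
    by (intro conjI V0_level[OF sr rsN] V0_irred' V0_iso)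
  fix V :: "'a L2 set"
  assume "V \<subseteq> L2_level r \<and> G_irreducible V \<and> G_isomorphic V (Specht_two_row s)"
  then show "V = V0 r s" using V0_unique by blast
qed

end



lemma kop_lin: "lin (kernel_op lam r1 r2 :: ('a::finite) L2 \<Rightarrow> _)"
  unfolding lin_def kernel_op_def by (auto intro!: ext simp: sum.distrib sum_distrib_left algebra_simps)

lemma kop_eqv: "eqv (kernel_op lam r r :: ('a::finite) L2 \<Rightarrow> _)"
  unfolding eqv_def
proof (intro allI impI ext)
  fix g :: "'a \<Rightarrow> 'a" and f :: "'a L2" and y assume g: "bij g"
  have ig: "bij (inv g)" using g by (simp add: bij_imp_bij_inv)
  have ij: "inj (inv g)" using ig bij_is_inj by blast
  have cy: "card (inv g ` y) = card y" by (rule card_inv_img[OF g])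
  have "(\<Sum>x1\<in>{x1. card x1 = r}. lam (card (inv g ` y - x1)) * f x1)
      = (\<Sum>x1\<in>UNIV. if card x1 = r then lam (card (inv g ` y - x1)) * f x1 else 0)"
    by (simp add: sum_UNIV_if)
  also have "\<dots> = (\<Sum>x1\<in>UNIV. if card (inv g ` x1) = r then lam (card (inv g ` y - inv g ` x1)) * f (inv g ` x1) else 0)"
    by (rule sum_reindex_img[OF ig])
  also have "\<dots> = (\<Sum>x1\<in>UNIV. if card x1 = r then lam (card (y - x1)) * f (inv g ` x1) else 0)"
  proof (rule sum.cong[OF refl])
    fix x1 :: "'a set"
    have "inv g ` y - inv g ` x1 = inv g ` (y - x1)" using image_set_diff[OF ij] by simp
    then have "card (inv g ` y - inv g ` x1) = card (y - x1)" using card_inv_img[OF g] by simp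
    then show "(if card (inv g ` x1) = r then lam (card (inv g ` y - inv g ` x1)) * f (inv g ` x1) else 0) =
          (if card x1 = r then lam (card (y - x1)) * f (inv g ` x1) else 0)"
      using card_inv_img[OF g, of x1] by simp
  qed
  also have "\<dots> = (\<Sum>x1\<in>{x1. card x1 = r}. lam (card (y - x1)) * f (inv g ` x1))"
    by (simp add: sum_UNIV_if)
  finally have S: "(\<Sum>x1\<in>{x1. card x1 = r}. lam (card (inv g ` y - x1)) * f x1)
      = (\<Sum>x1\<in>{x1. card x1 = r}. lam (card (y - x1)) * f (inv g ` x1))" .
  show "kernel_op lam r r (rho g f) y = rho g (kernel_op lam r r f) y"
    unfolding kernel_op_def rho_def using S cy by simp
qed

lemma kop_trace: "op_trace (kernel_op lam r r :: ('a::finite) L2 \<Rightarrow> _) = of_nat (CARD('a) choose r) * lam 0"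
proof -
  have "op_trace (kernel_op lam r r :: ('a::finite) L2 \<Rightarrow> _) = (\<Sum>x\<in>(UNIV::'a set set). if card x = r then lam 0 else 0)"
    unfolding tr_def
  proof (rule sum.cong[OF refl])
    fix x :: "'a set"
    have "(\<Sum>x1\<in>{x1. card x1 = r}. lam (card (x - x1)) * dl x x1) = (\<Sum>x1\<in>{x1. card x1 = r}. if x1 = x then lam (card (x - x1)) else 0)"
      by (rule sum.cong) (auto simp: dl_def)
    also have "\<dots> = (if x \<in> {x1. card x1 = r} then lam (card (x - x)) else 0)"
      by (subst sum.delta) simp_all
    finally show "kernel_op lam r r (dl x) x = (if card x = r then lam 0 else 0)"
      by (simp add: kernel_op_def)
  qed
  also have "\<dots> = of_nat (card {x::'a set. card x = r}) * lam 0" by (simp add: sum.If_cases)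
  finally show ?thesis by (simp add: card_level_set)
qed

lemma orth_proj_eq:
  assumes V: "csubspace V" and e: "e \<in> V" and p: "\<forall>\<phi>\<in>V. inner_L2 (\<lambda>x. \<psi> x - e x) \<phi> = 0"
  shows "orth_proj V \<psi> = (e :: ('a::finite) L2)"
  unfolding orth_proj_def
proof (rule the_equality)
  show "e \<in> V \<and> (\<forall>\<phi>\<in>V. inner_L2 (\<lambda>x. \<psi> x - e x) \<phi> = 0)" using e p by blast
  fix u assume u: "u \<in> V \<and> (\<forall>\<phi>\<in>V. inner_L2 (\<lambda>x. \<psi> x - u x) \<phi> = 0)"
  define d where "d = (\<lambda>x. u x - e x)"
  have "(\<lambda>x. u x + (\<lambda>x. (-1) * e x) x) \<in> V" using csub_add[OF V _ csub_scale[OF V e]] u by blast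
  then have dV: "d \<in> V" unfolding d_def by simp
  have "d = (\<lambda>x. (\<lambda>x. \<psi> x - e x) x - (\<lambda>x. \<psi> x - u x) x)" unfolding d_def by auto
  then have "inner_L2 d d = inner_L2 (\<lambda>x. (\<lambda>x. \<psi> x - e x) x - (\<lambda>x. \<psi> x - u x) x) d" by simp
  also have "\<dots> = inner_L2 (\<lambda>x. \<psi> x - e x) d - inner_L2 (\<lambda>x. \<psi> x - u x) d"
    by (rule inner_diff_left)
  also have "\<dots> = 0" using p u dV by simp
  finally have "d = (\<lambda>x. 0)" by (rule inner_self_0)
  show "u = e"
  proof
    fix x
    have "d x = 0" using \<open>d = (\<lambda>x. 0)\<close> by simp
    then show "u x = e x" by (simp add: d_def)
  qed
qed



theorem mainTheorem7:
  fixes r s :: nat and lam :: "nat \<Rightarrow> complex" and p :: "complex poly"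
    and Lam :: "('a::finite) L2 \<Rightarrow> 'a L2"
  defines "Lam \<equiv> kernel_op lam r r"
  assumes "r \<le> CARD('a)" and "s \<le> min r (CARD('a) - r)"
    and "degree p = s" and "poly p 0 = 1"
    and "\<forall>k::nat. max 0 (int r - int r) \<le> int k \<and> k \<le> min (CARD('a) - r) r
            \<longrightarrow> lam k = poly p (of_nat k)"
    and "\<forall>\<psi>\<in>L2_rs r s. Lam \<psi> \<in> L2_rs r s"
    and "\<forall>\<psi>. (\<forall>\<phi>\<in>L2_rs r s. inner_L2 \<psi> \<phi> = 0) \<longrightarrow> Lam \<psi> = (\<lambda>x. 0)"
  shows "op_trace Lam = of_nat (CARD('a) choose r)
    \<and> orth_proj (L2_rs r s :: 'a L2 set) =
      (\<lambda>\<psi> x. ((of_nat (CARD('a) choose s) - of_nat (binom_int CARD('a) (int s - 1)))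
                / of_nat (CARD('a) choose r)) * Lam \<psi> x)"
proof -
  have rN: "r \<le> CARD('a)" and sr: "s \<le> r" and srN: "s \<le> CARD('a) - r" using assms(2,3) by auto
  have rsN: "r + s \<le> CARD('a)" using rN srN by simp
  have sN: "2 * s \<le> CARD('a)" using sr rsN by simp
  obtain x0 :: "'a set" where cx0: "card x0 = r"
    using obtain_subset_with_card_n[of r "UNIV :: 'a set"] rN by auto
  have "card (-x0) = CARD('a) - r" using cx0 by (simp add: Compl_eq_Diff_UNIV card_Diff_subset)
  then obtain z0 :: "'a set" where z0: "z0 \<subseteq> -x0" "card z0 = s"
    using obtain_subset_with_card_n[of s "-x0"] srN by auto
  have dz: "z0 \<inter> x0 = {}" using z0 by auto
  note cz0 = z0(2)
  have L2eq: "L2_rs r s = (V0 r s :: 'a L2 set)" by (rule L2_rs_eq[OF sr rsN cx0 cz0 dz])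
  have LL: "lin Lam" unfolding Lam_def by (rule kop_lin)
  have LQ: "eqv Lam" unfolding Lam_def by (rule kop_eqv)
  have lam0: "lam 0 = 1" using assms(5,6) by auto
  have trL: "op_trace Lam = of_nat (CARD('a) choose r)" unfolding Lam_def kop_trace lam0 by simp
  have h1: "\<forall>\<psi>\<in>V0 r s. Lam \<psi> \<in> V0 r s" using assms(7) L2eq by simp
  have h2: "\<And>\<psi>. (\<forall>\<phi>\<in>V0 r s. inner_L2 \<psi> \<phi> = 0) \<Longrightarrow> Lam \<psi> = (\<lambda>x. 0)" using assms(8) L2eq by simp
  define v where "v = vv r s x0"
  have vV: "v \<in> V0 r s" unfolding v_def by (rule v0_V0[OF sr rsN cx0 cz0 dz])
  have LvV: "Lam v \<in> V0 r s" using h1 vV by blast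
  have HLv: "Hinv x0 (Lam v)" unfolding Hinv_def
  proof (intro allI impI)
    fix h :: "'a \<Rightarrow> 'a" assume h: "bij h \<and> h ` x0 = x0"
    have "rho h (Lam v) = Lam (rho h v)" using LQ h unfolding eqv_def by simp
    also have "rho h v = v" using Hinv_v0[OF sr rsN cx0 cz0 dz] h unfolding Hinv_def v_def by blast
    finally show "rho h (Lam v) = Lam v" .
  qed
  obtain a where a: "Lam v = (\<lambda>x. a * v x)" using key2[OF sr rsN cx0 cz0 dz LvV HLv] v_def by blast
  have LamE: "Lam (EE r s (dl y)) = (\<lambda>x. a * EE r s (dl y) x)" for y :: "'a set"
  proof (cases "card y = r")
    case True
    then obtain g where g: "bij g" "EE r s (dl y) = rho g v" using EE_dl_lev[OF sr rsN cx0 cz0 dz] v_def by blast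
    have "Lam (rho g v) = rho g (Lam v)" using LQ g(1) unfolding eqv_def by simp
    also have "\<dots> = (\<lambda>x. a * rho g v x)" unfolding a by (simp add: rho_def)
    finally show ?thesis using g(2) by simp
  next
    case False
    then have "EE r s (dl y) = (\<lambda>x. 0)" by (rule EE_dl_off[OF sr rsN cx0 cz0 dz])
    then show ?thesis using lin_zero[OF LL] by simp
  qed
  have LamEf: "Lam (EE r s f) = (\<lambda>x. a * EE r s f x)" for f :: "'a L2"
  proof -
    have "Lam (EE r s f) = Lam (\<lambda>x. \<Sum>y\<in>UNIV. f y * EE r s (dl y) x)" using lin_exp[OF lin_EE, of r s f] by simp
    also have "\<dots> = (\<lambda>x. \<Sum>y\<in>UNIV. f y * Lam (EE r s (dl y)) x)" by (rule lin_sum_scale[OF LL]) simp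
    also have "\<dots> = (\<lambda>x. a * (\<Sum>y\<in>UNIV. f y * EE r s (dl y) x))"
      by (simp add: LamE sum_distrib_left algebra_simps)
    also have "\<dots> = (\<lambda>x. a * EE r s f x)" using lin_exp[OF lin_EE, of r s f] by simp
    finally show ?thesis .
  qed
  have Lamf: "Lam f = (\<lambda>x. a * EE r s f x)" for f :: "'a L2"
  proof -
    have "Lam f = Lam (\<lambda>x. EE r s f x + (\<lambda>x. f x - EE r s f x) x)" by simp
    also have "\<dots> = (\<lambda>x. Lam (EE r s f) x + Lam (\<lambda>x. f x - EE r s f x) x)" by (rule lin_add[OF LL])
    also have "Lam (\<lambda>x. f x - EE r s f x) = (\<lambda>x. 0)"
      using h2 EE_perp[OF sr rsN] by blast
    finally show ?thesis using LamEf by simp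
  qed
  have LamFun: "Lam = (\<lambda>f x. a * EE r s f x)" using Lamf by (rule ext)
  define d :: complex where "d = of_nat (CARD('a) choose s) - of_nat (binom_int CARD('a) (int s - 1))"
  define C :: complex where "C = of_nat (CARD('a) choose r)"
  have trE: "op_trace (EE r s :: 'a L2 \<Rightarrow> _) = d"
    unfolding d_def using tr_EE[OF sr rsN] tr_PP[OF sN] by simp
  have aC: "a * d = C"
  proof -
    have "C = op_trace Lam" using trL C_def by simp
    also have "\<dots> = a * op_trace (EE r s :: 'a L2 \<Rightarrow> _)" unfolding LamFun by (rule tr_scale)
    finally show ?thesis using trE by simp
  qed
  have Cnz: "C \<noteq> 0" unfolding C_def using rN by simp
  have orth: "orth_proj (V0 r s) f = EE r s f" for f :: "'a L2"
    by (rule orth_proj_eq[OF V0_csub EE_in[OF sr rsN] ballI[OF EE_perp[OF sr rsN]]])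
  have "orth_proj (L2_rs r s :: 'a L2 set) = (\<lambda>\<psi> x. (d / C) * Lam \<psi> x)"
  proof (intro ext)
    fix \<psi> :: "'a L2" and x
    have "(d / C) * Lam \<psi> x = (a * d / C) * EE r s \<psi> x" using Lamf by simp
    also have "\<dots> = EE r s \<psi> x" using aC Cnz by simp
    finally show "orth_proj (L2_rs r s) \<psi> x = (d / C) * Lam \<psi> x" using orth L2eq by simp
  qed
  then show ?thesis using trL unfolding d_def C_def by simp
qed


end
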